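(* Assume (A1)–(A3), (B1) and (C). Then for every sufficiently small $\lambda$ there exist points $t_{\lambda,1},\dots,t_{\lambda,M}$ such that each $t_{\lambda,m}$ is a local extremum of $f_\lambda$ and $|t_{\lambda,m}-t_m|\lesssim\lambda^{r_1}$. Moreover, on the event $A_n$ there exist points $\hat t_1,\dots,\hat t_M$ such that each $\hat t_m$ is a local extremum of $\widehat\mu_f$ and $|\hat t_m-t_{\lambda,m}|\lesssim \sqrt{\log n}/(\sqrt n\lambda)$.
   Context: Data: $(X_i,y_i)$, $i=1,\dots,n$, i.i.d. from $\mathbb P_0$ on $[0,1]\times\mathbb R$ with $y_i=f_0(X_i)+\epsilon_i$, $X_i$ having a density $p_X$ on $[0,1]$, $\epsilon_i\sim N(0,\sigma^2)$ i.i.d. independent of the $X_i$. $X=(X_1,\dots,X_n)$, $\mathbf y=(y_i)$, $\lambda=\lambda_n>0$. $K$ is a continuous symmetric positive definite kernel on $[0,1]^2$, $K_{jl}=\partial^{j+l}K/\partial x^j\partial x'^l$, $K(X,X)=(K(X_i,X_j))$, $K_{j0}(x,X)=(K_{j0}(x,X_i))_i$ (row), $K_{0l}(X,x)$ (column). $\widehat\mu_f(x)=K(x,X)[K(X,X)+n\lambda I_n]^{-1}\mathbf y$; $\widehat\mu^{(k)}_{f'}(x)=K_{k+1,0}(x,X)[K(X,X)+n\lambda I_n]^{-1}\mathbf y$; $\widehat\sigma^{2(k)}_{f'}(x)=\sigma^2(n\lambda)^{-1}\sum_{i=0}^k\binom ki\{K_{i+1,k+1-i}(x,x)-K_{i+1,0}(x,X)[K(X,X)+n\lambda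 I_n]^{-1}K_{0,k+1-i}(X,x)\}$. $L_Kf(x)=\int_0^1K(x,x')f(x')p_X(x')dx'$; $f_\lambda=(L_K+\lambda I)^{-1}L_Kf_0$; $\varphi_{jl}(x)=[(L_K+\lambda I)^{-1}K_{jl}(x,\cdot)](x)$; $\kappa_{jj}=\sup_xK_{jj}(x,x)$, $\kappa=\kappa_{00}$, $\kappa_{0j}=\sup_{x,x'}|K_{0j}(x,x')|$, $R=\|f_0\|_\infty\vee\sigma$. Assumptions: (A1) $f_0\in C^2[0,1]$; (A2) $f_0$ has exactly $M$ local extrema, $M\ge1$ finite, at $0<t_1<\dots<t_M<1$; (A3) $f_0''(t_m)\neq0$ for all $m$; (B1) $K\in C^8([0,1]^2)$; (C) $\|f_\lambda'-f_0'\|_\infty\lesssim\lambda^{r_1}$ and $\|f_\lambda''-f_0''\|_\infty\lesssim\lambda^{r_2}$ for some $0<r_1,r_2\le1$. $A_n$ denotes an event with $\mathbb P_0(A_n)\ge1-n^{-10}$ on which, for all $k=0,\dots,3$ and $x\in[0,1]$: $\|\widehat\mu^{(k)}_{f'}-f_\lambda^{(k+1)}\|_\infty\le \frac{2\sqrt{\kappa\kappa_{k+1,k+1}}R\sqrt{10\log n+3}}{\sqrt n\lambda}(14+\frac{8\sqrt\kappa\sqrt{10\log n+3}}{3\sqrt{n\lambda}})$ and $|\widehat\sigma^{2(k)}_{f'}(x)-\sigma^2n^{-1}\sum_{i=0}^k\binom ki\varphi_{i+1,k+1-i}(x)|\le\sum_{i=0}^k\binom ki\frac{\sqrt{\kappa\kappa_{i+1,i+1}}\kappa_{0,k+1-i}\sigma^2\sqrt{20\log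 n+6}}{n\sqrt n\lambda^2}(10+\frac{4\sqrt\kappa\sqrt{20\log n+6}}{3\sqrt{n\lambda}})$ (such an event exists when (B1) holds). The symbol $\lesssim$ means inequality up to a constant not depending on $n$ or $\lambda$. *)

theory Defs
  imports "HOL-Analysis.Analysis"
begin

definition is_local_extremum :: "(real \<Rightarrow> real) \<Rightarrow> real \<Rightarrow> bool" where
  "is_local_extremum f t \<longleftrightarrow> t \<in> {0<..<1} \<and>
     (\<exists>e>0. (\<forall>s. \<bar>s - t\<bar> < e \<longrightarrow> f s \<le> f t) \<or> (\<forall>s. \<bar>s - t\<bar> < e \<longrightarrow> f t \<le> f s))"

definition pd_kernel :: "(real \<Rightarrow> real \<Rightarrow> real) \<Rightarrow> bool" where
  "pd_kernel K \<longleftrightarrow>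
     (\<forall>x\<in>{0..1}. \<forall>x'\<in>{0..1}. K x x' = K x' x) \<and>
     (\<forall>(n::nat) (z::nat \<Rightarrow> real) (c::nat \<Rightarrow> real). (\<forall>i<n. z i \<in> {0..1}) \<longrightarrow>
        0 \<le> (\<Sum>i<n. \<Sum>j<n. c i * c j * K (z i) (z j)))"

text \<open>K is C^r on [0,1]^2 with partial derivatives Kd j l = d^(j+l) K / dx^j dx'^l.\<close>
definition kernel_Ck :: "nat \<Rightarrow> (real \<Rightarrow> real \<Rightarrow> real) \<Rightarrow> (nat \<Rightarrow> nat \<Rightarrow> real \<Rightarrow> real \<Rightarrow> real) \<Rightarrow> bool" where
  "kernel_Ck r K Kd \<longleftrightarrow>
     (\<forall>x\<in>{0..1}. \<forall>x'\<in>{0..1}. Kd 0 0 x x' = K x x') \<and>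
     (\<forall>j l. j + l \<le> r \<longrightarrow> continuous_on ({0..1} \<times> {0..1}) (\<lambda>(x, x'). Kd j l x x')) \<and>
     (\<forall>j l. j + l < r \<longrightarrow> (\<forall>x\<in>{0..1}. \<forall>x'\<in>{0..1}.
        ((\<lambda>s. Kd j l s x') has_real_derivative Kd (Suc j) l x x') (at x within {0..1}) \<and>
        ((\<lambda>s. Kd j l x s) has_real_derivative Kd j (Suc l) x x') (at x' within {0..1})))"

definition LK :: "(real \<Rightarrow> real \<Rightarrow> real) \<Rightarrow> (real \<Rightarrow> real) \<Rightarrow> (real \<Rightarrow> real) \<Rightarrow> real \<Rightarrow> real" where
  "LK K p f x = integral {0..1} (\<lambda>x'. K x x' * f x' * p x')"

text \<open>(L_K + lam I)^{-1} h, as the continuous function on [0,1] (zero outside) solving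
  L_K g + lam g = h on [0,1].\<close>
definition resolvent :: "(real \<Rightarrow> real \<Rightarrow> real) \<Rightarrow> (real \<Rightarrow> real) \<Rightarrow> real \<Rightarrow> (real \<Rightarrow> real) \<Rightarrow> real \<Rightarrow> real" where
  "resolvent K p lam h = (THE g. continuous_on {0..1} g \<and> (\<forall>x. x \<notin> {0..1} \<longrightarrow> g x = 0) \<and>
       (\<forall>x\<in>{0..1}. LK K p g x + lam * g x = h x))"

definition f_lambda :: "(real \<Rightarrow> real \<Rightarrow> real) \<Rightarrow> (real \<Rightarrow> real) \<Rightarrow> real \<Rightarrow> (real \<Rightarrow> real) \<Rightarrow> real \<Rightarrow> real" where
  "f_lambda K p lam f0 = resolvent K p lam (LK K p f0)"

definition phi :: "(real \<Rightarrow> real \<Rightarrow> real) \<Rightarrow> (nat \<Rightarrow> nat \<Rightarrow> real \<Rightarrow> real \<Rightarrow> real) \<Rightarrow> (real \<Rightarrow> real) \<Rightarrow> real \<Rightarrow> nat \<Rightarrow> nat \<Rightarrow> real \<Rightarrow> real" where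
  "phi K Kd p lam j l x = resolvent K p lam (\<lambda>x'. Kd j l x x') x"

text \<open>[K(X,X) + n lam I_n]^{-1} b, vectors indexed by i < n (zero beyond).\<close>
definition krr_solve :: "(real \<Rightarrow> real \<Rightarrow> real) \<Rightarrow> nat \<Rightarrow> real \<Rightarrow> (nat \<Rightarrow> real) \<Rightarrow> (nat \<Rightarrow> real) \<Rightarrow> nat \<Rightarrow> real" where
  "krr_solve K n lam X b = (THE a. (\<forall>i. n \<le> i \<longrightarrow> a i = 0) \<and>
       (\<forall>i<n. (\<Sum>j<n. K (X i) (X j) * a j) + real n * lam * a i = b i))"

definition mu_hat :: "(real \<Rightarrow> real \<Rightarrow> real) \<Rightarrow> nat \<Rightarrow> real \<Rightarrow> (nat \<Rightarrow> real) \<Rightarrow> (nat \<Rightarrow> real) \<Rightarrow> real \<Rightarrow> real" where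
  "mu_hat K n lam X y x = (\<Sum>i<n. K x (X i) * krr_solve K n lam X y i)"

definition mu_hat_deriv :: "(real \<Rightarrow> real \<Rightarrow> real) \<Rightarrow> (nat \<Rightarrow> nat \<Rightarrow> real \<Rightarrow> real \<Rightarrow> real) \<Rightarrow> nat \<Rightarrow> real \<Rightarrow> (nat \<Rightarrow> real) \<Rightarrow> (nat \<Rightarrow> real) \<Rightarrow> nat \<Rightarrow> real \<Rightarrow> real" where
  "mu_hat_deriv K Kd n lam X y k x = (\<Sum>i<n. Kd (Suc k) 0 x (X i) * krr_solve K n lam X y i)"

definition sigma2_hat :: "(real \<Rightarrow> real \<Rightarrow> real) \<Rightarrow> (nat \<Rightarrow> nat \<Rightarrow> real \<Rightarrow> real \<Rightarrow> real) \<Rightarrow> real \<Rightarrow> nat \<Rightarrow> real \<Rightarrow> (nat \<Rightarrow> real) \<Rightarrow> nat \<Rightarrow> real \<Rightarrow> real" where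
  "sigma2_hat K Kd sig n lam X k x = sig\<^sup>2 / (real n * lam) *
     (\<Sum>i\<le>k. real (k choose i) * (Kd (Suc i) (Suc k - i) x x -
        (\<Sum>j<n. Kd (Suc i) 0 x (X j) * krr_solve K n lam X (\<lambda>j'. Kd 0 (Suc k - i) (X j') x) j)))"

definition kappa_diag :: "(nat \<Rightarrow> nat \<Rightarrow> real \<Rightarrow> real \<Rightarrow> real) \<Rightarrow> nat \<Rightarrow> real" where
  "kappa_diag Kd j = (SUP x\<in>{0..1}. Kd j j x x)"

definition kappa_0 :: "(nat \<Rightarrow> nat \<Rightarrow> real \<Rightarrow> real \<Rightarrow> real) \<Rightarrow> nat \<Rightarrow> real" where
  "kappa_0 Kd j = (SUP z\<in>{0..1} \<times> {0..1}. \<bar>Kd 0 j (fst z) (snd z)\<bar>)"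

definition R_const :: "(real \<Rightarrow> real) \<Rightarrow> real \<Rightarrow> real" where
  "R_const f0 sig = max (SUP x\<in>{0..1}. \<bar>f0 x\<bar>) sig"

definition event_An :: "(real \<Rightarrow> real \<Rightarrow> real) \<Rightarrow> (nat \<Rightarrow> nat \<Rightarrow> real \<Rightarrow> real \<Rightarrow> real) \<Rightarrow> (real \<Rightarrow> real) \<Rightarrow>
    (real \<Rightarrow> real) \<Rightarrow> real \<Rightarrow> real \<Rightarrow> nat \<Rightarrow> (nat \<Rightarrow> real) \<Rightarrow> (nat \<Rightarrow> real) \<Rightarrow> bool" where
  "event_An K Kd p f0 sig lam n X y \<longleftrightarrow>
     (let \<kappa> = kappa_diag Kd 0; R = R_const f0 sig in
      \<forall>k\<le>3.
       (\<forall>x\<in>{0<..<1}. \<bar>mu_hat_deriv K Kd n lam X y k x - (deriv ^^ Suc k) (f_lambda K p lam f0) x\<bar>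
          \<le> 2 * sqrt (\<kappa> * kappa_diag Kd (Suc k)) * R * sqrt (10 * ln (real n) + 3) / (sqrt (real n) * lam)
            * (14 + 8 * sqrt \<kappa> * sqrt (10 * ln (real n) + 3) / (3 * sqrt (real n * lam)))) \<and>
       (\<forall>x\<in>{0..1}. \<bar>sigma2_hat K Kd sig n lam X k x
            - sig\<^sup>2 / real n * (\<Sum>i\<le>k. real (k choose i) * phi K Kd p lam (Suc i) (Suc k - i) x)\<bar>
          \<le> (\<Sum>i\<le>k. real (k choose i) * (sqrt (\<kappa> * kappa_diag Kd (Suc i)) * kappa_0 Kd (Suc k - i) * sig\<^sup>2
               * sqrt (20 * ln (real n) + 6) / (real n * sqrt (real n) * lam\<^sup>2)
               * (10 + 4 * sqrt \<kappa> * sqrt (20 * ln (real n) + 6) / (3 * sqrt (real n * lam)))))))"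

end

theory Submission
  imports Defs
begin
locale kp =
  fixes K :: "real \<Rightarrow> real \<Rightarrow> real" and p :: "real \<Rightarrow> real"
  assumes p_nonneg: "\<And>x. x \<in> {0..1} \<Longrightarrow> 0 \<le> p x"
    and p_int: "p integrable_on {0..1}"
    and p_one: "integral {0..1} p = 1"
    and K_cont: "continuous_on ({0..1} \<times> {0..1}) (\<lambda>(x, t). K x t)"
    and K_sym: "\<And>x t. x \<in> {0..1} \<Longrightarrow> t \<in> {0..1} \<Longrightarrow> K x t = K t x"
    and K_pd: "\<And>(n::nat) (z::nat \<Rightarrow> real) (c::nat \<Rightarrow> real). (\<forall>i<n. z i \<in> {0..1}) \<Longrightarrow> 0 \<le> (\<Sum>i<n. \<Sum>j<n. c i * c j * K (z i) (z j))"
begin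

definition Ip :: "(real \<Rightarrow> real) \<Rightarrow> real" where
  "Ip f = integral {0..1} (\<lambda>x. f x * p x)"

lemma intp: assumes "continuous_on {0..1} f" shows "(\<lambda>x. f x * p x) integrable_on {0..1}"
proof -
  have "(\<lambda>x. f x * p x) absolutely_integrable_on {0..1}"
  proof (rule absolutely_integrable_bounded_measurable_product_real)
    show "f \<in> borel_measurable (lebesgue_on {0..1})"
      using assms by (intro continuous_imp_measurable_on_sets_lebesgue) auto
    show "bounded (f ` {0..1})"
      using assms by (intro compact_imp_bounded compact_continuous_image) auto
    show "p absolutely_integrable_on {0..1}"
      using p_int p_nonneg by (intro nonnegative_absolutely_integrable_1) auto
  qed auto
  then show ?thesis using absolutely_integrable_on_def by blast
qed

lemma Ip_add: "continuous_on {0..1} f \<Longrightarrow> continuous_on {0..1} g \<Longrightarrow> Ip (\<lambda>x. f x + g x) = Ip f + Ip g"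
  unfolding Ip_def distrib_right by (intro integral_add intp)

lemma Ip_diff: "continuous_on {0..1} f \<Longrightarrow> continuous_on {0..1} g \<Longrightarrow> Ip (\<lambda>x. f x - g x) = Ip f - Ip g"
  unfolding Ip_def left_diff_distrib by (intro integral_diff intp)

lemma Ip_cmul: "Ip (\<lambda>x. c * f x) = c * Ip f"
  unfolding Ip_def by (simp add: mult.assoc)

lemma Ip_le: "continuous_on {0..1} f \<Longrightarrow> continuous_on {0..1} g \<Longrightarrow> (\<And>x. x \<in> {0..1} \<Longrightarrow> f x \<le> g x) \<Longrightarrow> Ip f \<le> Ip g"
  unfolding Ip_def by (intro integral_le intp) (auto intro!: mult_right_mono p_nonneg)

lemma Ip_const: "Ip (\<lambda>x. c) = c"
  unfolding Ip_def using p_one by simp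

lemma Ip_bound: assumes "continuous_on {0..1} f" "\<And>x. x \<in> {0..1} \<Longrightarrow> \<bar>f x\<bar> \<le> B"
  shows "\<bar>Ip f\<bar> \<le> B"
proof -
  have b: "\<And>x. x \<in> {0..1} \<Longrightarrow> - B \<le> f x \<and> f x \<le> B" using assms(2) by (metis abs_le_iff minus_le_iff)
  have "Ip f \<le> Ip (\<lambda>x. B)" using assms b by (intro Ip_le) auto
  moreover have "Ip (\<lambda>x. - B) \<le> Ip f" using assms b by (intro Ip_le) auto
  ultimately show ?thesis by (simp add: Ip_const)
qed

lemma Ip_nonneg: "continuous_on {0..1} f \<Longrightarrow> (\<And>x. x \<in> {0..1} \<Longrightarrow> 0 \<le> f x) \<Longrightarrow> 0 \<le> Ip f"
  using Ip_le[of "\<lambda>x. 0" f] by (simp add: Ip_const)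

lemma Ip_abs: "continuous_on {0..1} f \<Longrightarrow> \<bar>Ip f\<bar> \<le> Ip (\<lambda>x. \<bar>f x\<bar>)"
proof -
  assume c: "continuous_on {0..1} f"
  then have c2: "continuous_on {0..1} (\<lambda>x. \<bar>f x\<bar>)" by (intro continuous_intros)
  have "Ip f \<le> Ip (\<lambda>x. \<bar>f x\<bar>)" using c c2 by (intro Ip_le) auto
  moreover have "Ip (\<lambda>x. - \<bar>f x\<bar>) \<le> Ip f" using c c2 by (intro Ip_le) (auto intro: continuous_intros)
  ultimately show ?thesis using Ip_cmul[of "-1" "\<lambda>x. \<bar>f x\<bar>"] by auto
qed

lemma Ip_abs_sq: assumes c: "continuous_on {0..1} f"
  shows "Ip (\<lambda>x. \<bar>f x\<bar>) \<le> sqrt (Ip (\<lambda>x. f x * f x))"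
proof -
  define a where "a = Ip (\<lambda>x. \<bar>f x\<bar>)"
  have ca: "continuous_on {0..1} (\<lambda>x. \<bar>f x\<bar>)" using c by (intro continuous_intros)
  have a0: "0 \<le> a" unfolding a_def using ca by (intro Ip_nonneg) auto
  have "0 \<le> Ip (\<lambda>x. (\<bar>f x\<bar> - a) * (\<bar>f x\<bar> - a))"
    using c by (intro Ip_nonneg continuous_intros) auto
  also have "(\<lambda>x. (\<bar>f x\<bar> - a) * (\<bar>f x\<bar> - a)) = (\<lambda>x. (f x * f x - 2 * a * \<bar>f x\<bar>) + a * a)"
    by (auto simp: algebra_simps abs_mult_self_eq)
  also have "Ip \<dots> = Ip (\<lambda>x. f x * f x) - 2 * a * a + a * a"
    using c ca by (simp add: Ip_add Ip_diff Ip_cmul Ip_const continuous_intros a_def[symmetric])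
  finally have "a * a \<le> Ip (\<lambda>x. f x * f x)" by simp
  then show ?thesis unfolding a_def[symmetric] using a0
    by (metis real_le_rsqrt power2_eq_square)
qed

end

lemma ucF: fixes F :: "real \<Rightarrow> real \<Rightarrow> real"
  assumes "continuous_on ({0..1::real} \<times> {0..1}) (\<lambda>(x, t). F x t)" "(e::real) > 0"
  shows "\<exists>d>0. \<forall>x\<in>{0..1}. \<forall>y\<in>{0..1}. \<forall>t\<in>{0..1}. \<forall>s\<in>{0..1}.
            \<bar>y - x\<bar> < d \<longrightarrow> \<bar>s - t\<bar> < d \<longrightarrow> \<bar>F y s - F x t\<bar> < (e::real)"
proof -
  have "uniformly_continuous_on ({0..1::real} \<times> {0..1}) (\<lambda>(x, t). F x t)"
    using assms(1) by (intro compact_uniformly_continuous compact_Times) auto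
  then obtain d where d: "d > 0" and
    H: "\<forall>z\<in>{0..1::real} \<times> {0..1}. \<forall>z'\<in>{0..1} \<times> {0..1}. dist z' z < d \<longrightarrow>
          dist ((\<lambda>(x, t). F x t) z') ((\<lambda>(x, t). F x t) z) < e"
    unfolding uniformly_continuous_on_def using assms(2) by metis
  show ?thesis
  proof (intro exI[of _ "d/2"] conjI ballI impI)
    fix x y t s :: real assume xy: "x \<in> {0..1}" "y \<in> {0..1}" "t \<in> {0..1}" "s \<in> {0..1}"
      and ds: "\<bar>y - x\<bar> < d/2" "\<bar>s - t\<bar> < d/2"
    have "dist (y, s) (x, t) \<le> dist y x + dist s t"
      unfolding dist_Pair_Pair
      by (rule real_le_lsqrt) (auto simp: power2_eq_square algebra_simps)
    also have "\<dots> < d" using ds by (simp add: dist_real_def)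
    finally have "dist (y, s) (x, t) < d" .
    then show "\<bar>F y s - F x t\<bar> < e" using H xy by (auto simp: dist_real_def)
  qed (use d in auto)
qed

context kp begin

lemma contF_slice: fixes F :: "real \<Rightarrow> real \<Rightarrow> real" assumes "continuous_on ({0..1} \<times> {0..1}) (\<lambda>(x, t). F x t)" "x \<in> {0..1}"
  shows "continuous_on {0..1} (F x)"
proof -
  have "continuous_on {0..1} ((\<lambda>(x, t). F x t) \<circ> (\<lambda>t. (x, t)))"
    using assms by (intro continuous_on_compose continuous_intros) (auto elim: continuous_on_subset)
  then show ?thesis by (simp add: o_def)
qed

lemma contF_slice2: fixes F :: "real \<Rightarrow> real \<Rightarrow> real" assumes "continuous_on ({0..1} \<times> {0..1}) (\<lambda>(x, t). F x t)" "t \<in> {0..1}"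
  shows "continuous_on {0..1} (\<lambda>x. F x t)"
proof -
  have "continuous_on {0..1} ((\<lambda>(x, t). F x t) \<circ> (\<lambda>x. (x, t)))"
    using assms by (intro continuous_on_compose continuous_intros) (auto elim: continuous_on_subset)
  then show ?thesis by (simp add: o_def)
qed

lemma contF_int: fixes F :: "real \<Rightarrow> real \<Rightarrow> real" assumes cF: "continuous_on ({0..1} \<times> {0..1}) (\<lambda>(x, t). F x t)"
  shows "continuous_on {0..1} (\<lambda>x. Ip (F x))"
proof (rule continuous_on_iff[THEN iffD2], intro ballI allI impI)
  fix x e :: real assume x: "x \<in> {0..1}" and e: "0 < e"
  obtain d where d: "d > 0" and H: "\<forall>x\<in>{0..1}. \<forall>y\<in>{0..1}. \<forall>t\<in>{0..1}. \<forall>s\<in>{0..1}.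
            \<bar>y - x\<bar> < d \<longrightarrow> \<bar>s - t\<bar> < d \<longrightarrow> \<bar>F y s - F x t\<bar> < e/2"
    using ucF[OF cF, of "e/2"] e by auto
  show "\<exists>d>0. \<forall>y\<in>{0..1}. dist y x < d \<longrightarrow> dist (Ip (F y)) (Ip (F x)) < e"
  proof (intro exI[of _ d] conjI ballI impI)
    fix y assume y: "y \<in> {0..1}" and dy: "dist y x < d"
    have "\<bar>Ip (\<lambda>t. F y t - F x t)\<bar> \<le> e/2"
      using H x y dy d
      by (intro Ip_bound continuous_intros contF_slice[OF cF]) (auto simp: dist_real_def less_imp_le)
    then show "dist (Ip (F y)) (Ip (F x)) < e"
      using Ip_diff[OF contF_slice[OF cF y] contF_slice[OF cF x]] e by (simp add: dist_real_def)
  qed (use d in auto)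
qed

lemma K_cont_slice: "x \<in> {0..1} \<Longrightarrow> continuous_on {0..1} (K x)"
  using contF_slice[OF K_cont] .

lemma LK_Ip: "LK K p u x = Ip (\<lambda>t. K x t * u t)"
  unfolding LK_def Ip_def by simp

lemma cont_Ku: "continuous_on {0..1} u \<Longrightarrow> continuous_on ({0..1} \<times> {0..1}) (\<lambda>(x, t). K x t * u t)"
proof -
  assume u: "continuous_on {0..1} u"
  have "continuous_on ({0..1} \<times> {0..1}) (\<lambda>z. (\<lambda>(x, t). K x t) z * u (snd z))"
    by (intro continuous_intros K_cont continuous_on_compose2[OF u]) auto
  then show ?thesis by (simp add: case_prod_beta)
qed

lemma LK_cont: "continuous_on {0..1} u \<Longrightarrow> continuous_on {0..1} (LK K p u)"
  unfolding LK_Ip[abs_def] using contF_int[OF cont_Ku] by simp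

end

context kp begin

lemma LK_add: "continuous_on {0..1} u \<Longrightarrow> continuous_on {0..1} v \<Longrightarrow> x \<in> {0..1} \<Longrightarrow>
    LK K p (\<lambda>t. u t + v t) x = LK K p u x + LK K p v x"
  unfolding LK_Ip distrib_left by (intro Ip_add continuous_intros K_cont_slice)

lemma LK_diff: "continuous_on {0..1} u \<Longrightarrow> continuous_on {0..1} v \<Longrightarrow> x \<in> {0..1} \<Longrightarrow>
    LK K p (\<lambda>t. u t - v t) x = LK K p u x - LK K p v x"
  unfolding LK_Ip right_diff_distrib by (intro Ip_diff continuous_intros K_cont_slice)

lemma LK_cmul: "LK K p (\<lambda>t. c * u t) x = c * LK K p u x"
proof -
  have "LK K p (\<lambda>t. c * u t) x = Ip (\<lambda>t. c * (K x t * u t))"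
    unfolding LK_Ip by (simp add: algebra_simps)
  then show ?thesis by (simp add: Ip_cmul LK_Ip)
qed

lemma LK_zero: "LK K p (\<lambda>t. 0) x = 0"
  using LK_cmul[of 0 "\<lambda>t. 0" x] by simp

lemma Ip_sum: "finite A \<Longrightarrow> (\<And>k. k \<in> A \<Longrightarrow> continuous_on {0..1} (f k)) \<Longrightarrow>
   Ip (\<lambda>x. \<Sum>k\<in>A. f k x) = (\<Sum>k\<in>A. Ip (f k))"
proof (induction A rule: finite_induct)
  case empty then show ?case using Ip_const[of 0] by simp
next
  case (insert a A)
  have "Ip (\<lambda>x. \<Sum>k\<in>insert a A. f k x) = Ip (\<lambda>x. f a x + (\<Sum>k\<in>A. f k x))"
    using insert by simp
  also have "\<dots> = Ip (f a) + Ip (\<lambda>x. \<Sum>k\<in>A. f k x)"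
    using insert by (intro Ip_add continuous_on_sum) auto
  finally show ?case using insert by simp
qed

lemma LK_sum: "finite A \<Longrightarrow> (\<And>k. k \<in> A \<Longrightarrow> continuous_on {0..1} (f k)) \<Longrightarrow> x \<in> {0..1} \<Longrightarrow>
   LK K p (\<lambda>t. \<Sum>k\<in>A. f k t) x = (\<Sum>k\<in>A. LK K p (f k) x)"
  unfolding LK_Ip sum_distrib_left
  by (intro Ip_sum) (auto intro!: continuous_intros K_cont_slice)

lemma K_bounded: obtains kap where "kap > 0" "\<And>x t. x \<in> {0..1} \<Longrightarrow> t \<in> {0..1} \<Longrightarrow> \<bar>K x t\<bar> \<le> kap"
proof -
  have "compact ((\<lambda>(x, t). K x t) ` ({0..1} \<times> {0..1}))"
    by (intro compact_continuous_image K_cont compact_Times) auto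
  then obtain B where B: "\<forall>z\<in>(\<lambda>(x, t). K x t) ` ({0..1} \<times> {0..1}). norm z \<le> B"
    using compact_imp_bounded bounded_iff by metis
  have "\<bar>K x t\<bar> \<le> max B 1" if "x \<in> {0..1}" "t \<in> {0..1}" for x t
  proof -
    have "K x t \<in> (\<lambda>(x, t). K x t) ` ({0..1} \<times> {0..1})" using that by force
    then have "norm (K x t) \<le> B" using B by blast
    then show ?thesis by simp
  qed
  then show ?thesis using that[of "max B 1"] by auto
qed

definition kap where "kap = (SOME k. k > 0 \<and> (\<forall>x\<in>{0..1}. \<forall>t\<in>{0..1}. \<bar>K x t\<bar> \<le> k))"

lemma kap: "kap > 0" "\<And>x t. x \<in> {0..1} \<Longrightarrow> t \<in> {0..1} \<Longrightarrow> \<bar>K x t\<bar> \<le> kap"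
proof -
  have "\<exists>k. k > 0 \<and> (\<forall>x\<in>{0..1}. \<forall>t\<in>{0..1}. \<bar>K x t\<bar> \<le> k)"
    using K_bounded by metis
  from someI_ex[OF this] show "kap > 0" "\<And>x t. x \<in> {0..1} \<Longrightarrow> t \<in> {0..1} \<Longrightarrow> \<bar>K x t\<bar> \<le> kap"
    unfolding kap_def by auto
qed

lemma LK_bound1: assumes u: "continuous_on {0..1} u" and x: "x \<in> {0..1}"
  shows "\<bar>LK K p u x\<bar> \<le> kap * Ip (\<lambda>t. \<bar>u t\<bar>)"
proof -
  have c: "continuous_on {0..1} (\<lambda>t. K x t * u t)" using u x by (intro continuous_intros K_cont_slice)
  have "\<bar>LK K p u x\<bar> \<le> Ip (\<lambda>t. \<bar>K x t * u t\<bar>)" unfolding LK_Ip using Ip_abs[OF c] .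
  also have "\<dots> \<le> Ip (\<lambda>t. kap * \<bar>u t\<bar>)"
    using c u x kap by (intro Ip_le continuous_intros K_cont_slice) (auto simp: abs_mult intro!: mult_right_mono)
  finally show ?thesis by (simp add: Ip_cmul)
qed

lemma LK_bound: assumes u: "continuous_on {0..1} u" and x: "x \<in> {0..1}"
  shows "\<bar>LK K p u x\<bar> \<le> kap * sqrt (Ip (\<lambda>t. u t * u t))"
  using LK_bound1[OF u x] Ip_abs_sq[OF u] kap(1)
  by (meson mult_left_mono less_imp_le order_trans)

lemma Ip_sq_nonneg: "continuous_on {0..1} u \<Longrightarrow> 0 \<le> Ip (\<lambda>t. u t * u t)"
  by (intro Ip_nonneg continuous_intros) auto

end

definition zz :: "nat \<Rightarrow> nat \<Rightarrow> real" where "zz N k = real k / real N"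
definition JJ :: "nat \<Rightarrow> nat \<Rightarrow> real set" where "JJ N k = {real k / real N .. real (Suc k) / real N}"

lemma split_int: fixes g :: "real \<Rightarrow> real"
  assumes g: "g integrable_on {0..1}" and N: "N > 0"
  shows "integral {0..1} g = (\<Sum>k<N. integral (JJ N k) g)"
proof -
  have "m \<le> N \<Longrightarrow> integral {0..real m / real N} g = (\<Sum>k<m. integral (JJ N k) g)" for m
  proof (induction m)
    case 0 then show ?case by simp
  next
    case (Suc m)
    have le: "real (Suc m) / real N \<le> 1" using Suc.prems N by simp
    have "integral {0..real m / real N} g + integral {real m / real N..real (Suc m) / real N} g
          = integral {0..real (Suc m) / real N} g"
      using le N by (intro Henstock_Kurzweil_Integration.integral_combine integrable_on_subinterval[OF g])
         (auto simp: divide_right_mono)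
    then show ?case using Suc by (simp add: JJ_def)
  qed
  from this[of N] N show ?thesis by simp
qed

lemma JJ_sub: assumes "k < N" shows "JJ N k \<subseteq> {0..1}"
proof -
  have "real (Suc k) / real N \<le> 1" using assms by simp
  then show ?thesis unfolding JJ_def by auto
qed

lemma JJ_close: assumes "k < N" "t \<in> JJ N k" shows "\<bar>t - zz N k\<bar> \<le> 1 / real N"
proof -
  have "real (Suc k) / real N - real k / real N = 1 / real N" by (simp add: diff_divide_distrib[symmetric])
  moreover have "real k / real N \<le> t" "t \<le> real (Suc k) / real N" using assms(2) unfolding JJ_def by auto
  ultimately show ?thesis unfolding zz_def by linarith
qed

lemma zz_in: "k < N \<Longrightarrow> zz N k \<in> {0..1}"
  unfolding zz_def by auto

context kp begin

definition ww where "ww N k = integral (JJ N k) p"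

lemma ww_nonneg: assumes k: "k < N" shows "0 \<le> ww N k"
proof -
  have "p integrable_on JJ N k"
    using integrable_on_subinterval[OF p_int, of "real k / real N" "real (Suc k) / real N"] JJ_sub[OF k]
    by (simp add: JJ_def)
  moreover have "\<And>t. t \<in> JJ N k \<Longrightarrow> 0 \<le> p t" using JJ_sub[OF k] p_nonneg by auto
  ultimately show ?thesis unfolding ww_def by (intro integral_nonneg) auto
qed

lemma ww_sum: "N > 0 \<Longrightarrow> (\<Sum>k<N. ww N k) = 1"
  unfolding ww_def using split_int[OF p_int] p_one by simp

lemma discr1:
  assumes G: "continuous_on {0..1} G" and N: "N > 0"
    and H: "\<And>k t. k < N \<Longrightarrow> t \<in> JJ N k \<Longrightarrow> \<bar>G t - G (zz N k)\<bar> \<le> e"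
  shows "\<bar>Ip G - (\<Sum>k<N. ww N k * G (zz N k))\<bar> \<le> e"
proof -
  have iG: "(\<lambda>t. G t * p t) integrable_on {0..1}" using intp[OF G] .
  have iGk: "(\<lambda>t. G t * p t) integrable_on JJ N k" if "k < N" for k
    using integrable_on_subinterval[OF iG, of "real k / real N" "real (Suc k) / real N"] JJ_sub[OF that]
    by (simp add: JJ_def)
  have ipk: "p integrable_on JJ N k" if "k < N" for k
    using integrable_on_subinterval[OF p_int, of "real k / real N" "real (Suc k) / real N"] JJ_sub[OF that]
    by (simp add: JJ_def)
  have e1: "Ip G = (\<Sum>k<N. integral (JJ N k) (\<lambda>t. G t * p t))"
    unfolding Ip_def using split_int[OF iG N] .
  have e2: "ww N k * G (zz N k) = integral (JJ N k) (\<lambda>t. G (zz N k) * p t)" for k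
    unfolding ww_def by simp
  have "Ip G - (\<Sum>k<N. ww N k * G (zz N k)) =
      (\<Sum>k<N. integral (JJ N k) (\<lambda>t. G t * p t) - integral (JJ N k) (\<lambda>t. G (zz N k) * p t))"
    unfolding e1 e2 sum_subtractf ..
  also have "\<dots> = (\<Sum>k<N. integral (JJ N k) (\<lambda>t. (G t - G (zz N k)) * p t))"
  proof (intro sum.cong refl)
    fix k assume k: "k \<in> {..<N}"
    show "integral (JJ N k) (\<lambda>t. G t * p t) - integral (JJ N k) (\<lambda>t. G (zz N k) * p t) =
          integral (JJ N k) (\<lambda>t. (G t - G (zz N k)) * p t)"
      unfolding left_diff_distrib using k iGk ipk
      by (intro integral_diff[symmetric]) (auto intro: integrable_on_mult_right)
  qed
  finally have eq: "Ip G - (\<Sum>k<N. ww N k * G (zz N k)) = (\<Sum>k<N. integral (JJ N k) (\<lambda>t. (G t - G (zz N k)) * p t))" .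
  have bd: "\<bar>integral (JJ N k) (\<lambda>t. (G t - G (zz N k)) * p t)\<bar> \<le> e * ww N k" if k: "k < N" for k
  proof -
    have i1: "(\<lambda>t. (G t - G (zz N k)) * p t) integrable_on JJ N k"
      unfolding left_diff_distrib using iGk[OF k] ipk[OF k]
      by (intro integrable_diff) (auto intro: integrable_on_mult_right)
    have i2: "(\<lambda>t. e * p t) integrable_on JJ N k" using ipk[OF k] by (intro integrable_on_mult_right)
    have i3: "(\<lambda>t. - (e * p t)) integrable_on JJ N k" using i2 by (intro integrable_neg)
    have pt: "t \<in> JJ N k \<Longrightarrow> 0 \<le> p t" for t using JJ_sub[OF k] p_nonneg by auto
    have up: "integral (JJ N k) (\<lambda>t. (G t - G (zz N k)) * p t) \<le> integral (JJ N k) (\<lambda>t. e * p t)"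
      using i1 i2 H[OF k] pt by (intro integral_le) (auto intro!: mult_right_mono simp: abs_le_iff)
    have lo: "integral (JJ N k) (\<lambda>t. - (e * p t)) \<le> integral (JJ N k) (\<lambda>t. (G t - G (zz N k)) * p t)"
    proof (intro integral_le[OF i3 i1])
      fix t assume t: "t \<in> JJ N k"
      have "- e \<le> G t - G (zz N k)" using H[OF k t] by (simp add: abs_le_iff)
      then have "- e * p t \<le> (G t - G (zz N k)) * p t" using pt[OF t] by (intro mult_right_mono)
      then show "- (e * p t) \<le> (G t - G (zz N k)) * p t" by simp
    qed
    show ?thesis using up lo unfolding ww_def by (simp add: abs_le_iff)
  qed
  have "\<bar>\<Sum>k<N. integral (JJ N k) (\<lambda>t. (G t - G (zz N k)) * p t)\<bar> \<le> (\<Sum>k<N. e * ww N k)"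
    using bd by (intro order_trans[OF sum_abs sum_mono]) auto
  also have "\<dots> = e" using ww_sum[OF N] by (simp add: sum_distrib_left[symmetric])
  finally show ?thesis using eq by simp
qed

definition DD where "DD N F = (\<Sum>k<N. \<Sum>j<N. ww N j * ww N k * F (zz N j) (zz N k))"

lemma discr2:
  fixes F :: "real \<Rightarrow> real \<Rightarrow> real"
  assumes cF: "continuous_on ({0..1} \<times> {0..1}) (\<lambda>(x, t). F x t)" and e: "e > 0"
  shows "\<exists>N0>0. \<forall>N\<ge>N0. \<bar>Ip (\<lambda>x. Ip (F x)) - DD N F\<bar> \<le> e"
proof -
  obtain d where d: "d > 0" and H: "\<forall>x\<in>{0..1}. \<forall>y\<in>{0..1}. \<forall>t\<in>{0..1}. \<forall>s\<in>{0..1}.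
            \<bar>y - x\<bar> < d \<longrightarrow> \<bar>s - t\<bar> < d \<longrightarrow> \<bar>F y s - F x t\<bar> < e/2"
    using ucF[OF cF, of "e/2"] e by auto
  obtain N0 :: nat where N0: "1 / real N0 < d" "N0 > 0"
    using d by (metis One_nat_def inverse_eq_divide less_trans_Suc reals_Archimedean zero_less_Suc gr0I)
  show ?thesis
  proof (intro exI[of _ N0] conjI allI impI)
    show "N0 > 0" by fact
    fix N assume NN: "N0 \<le> N"
    then have N: "N > 0" using N0 by simp
    have close: "\<bar>t - zz N k\<bar> < d" if "k < N" "t \<in> JJ N k" for k t
    proof -
      have "1 / real N \<le> 1 / real N0" using NN N0 by (intro divide_left_mono) auto
      then show ?thesis using JJ_close[OF that] N0 by linarith
    qed
    define S where "S x = (\<Sum>k<N. ww N k * F x (zz N k))" for x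
    have cS: "continuous_on {0..1} S" unfolding S_def
      by (intro continuous_intros contF_slice2[OF cF] zz_in) auto
    have inner: "\<bar>Ip (F x) - S x\<bar> \<le> e/2" if x: "x \<in> {0..1}" for x
      unfolding S_def
    proof (rule discr1[OF contF_slice[OF cF x] N])
      fix k t assume k: "k < N" and t: "t \<in> JJ N k"
      show "\<bar>F x t - F x (zz N k)\<bar> \<le> e/2"
        using H x close[OF k t] JJ_sub[OF k] t zz_in[OF k] d
        by (metis abs_zero cancel_comm_monoid_add_class.diff_cancel less_eq_real_def subsetD)
    qed
    have o1: "\<bar>Ip (\<lambda>x. Ip (F x)) - Ip S\<bar> \<le> e/2"
      unfolding Ip_diff[OF contF_int[OF cF] cS, symmetric] using inner
      by (intro Ip_bound continuous_intros contF_int[OF cF] cS) auto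
    have IpS: "Ip S = (\<Sum>k<N. ww N k * Ip (\<lambda>x. F x (zz N k)))"
      unfolding S_def
      by (subst Ip_sum) (auto simp: Ip_cmul intro!: continuous_intros contF_slice2[OF cF] zz_in)
    have o2: "\<bar>Ip (\<lambda>x. F x (zz N k)) - (\<Sum>j<N. ww N j * F (zz N j) (zz N k))\<bar> \<le> e/2" if k: "k < N" for k
    proof (rule discr1[OF contF_slice2[OF cF zz_in[OF k]] N])
      fix j t assume j: "j < N" and t: "t \<in> JJ N j"
      show "\<bar>F t (zz N k) - F (zz N j) (zz N k)\<bar> \<le> e/2"
        using H close[OF j t] JJ_sub[OF j] t zz_in[OF k] zz_in[OF j] d
        by (metis abs_zero cancel_comm_monoid_add_class.diff_cancel less_eq_real_def subsetD)
    qed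
    have DDe: "DD N F = (\<Sum>k<N. ww N k * (\<Sum>j<N. ww N j * F (zz N j) (zz N k)))"
      unfolding DD_def sum_distrib_left by (simp add: algebra_simps)
    have "\<bar>Ip S - DD N F\<bar> = \<bar>\<Sum>k<N. ww N k * (Ip (\<lambda>x. F x (zz N k)) - (\<Sum>j<N. ww N j * F (zz N j) (zz N k)))\<bar>"
      unfolding IpS DDe right_diff_distrib sum_subtractf ..
    also have "\<dots> \<le> (\<Sum>k<N. ww N k * (e/2))"
    proof (intro order_trans[OF sum_abs sum_mono])
      fix k assume "k \<in> {..<N}"
      then have k: "k < N" by simp
      show "\<bar>ww N k * (Ip (\<lambda>x. F x (zz N k)) - (\<Sum>j<N. ww N j * F (zz N j) (zz N k)))\<bar> \<le> ww N k * (e/2)"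
        unfolding abs_mult abs_of_nonneg[OF ww_nonneg[OF k]] using o2[OF k] ww_nonneg[OF k]
        by (intro mult_left_mono) auto
    qed
    also have "\<dots> = (\<Sum>k<N. ww N k) * (e/2)" by (rule sum_distrib_right[symmetric])
    also have "\<dots> = e/2" using ww_sum[OF N] by simp
    finally show "\<bar>Ip (\<lambda>x. Ip (F x)) - DD N F\<bar> \<le> e" using o1 by linarith
  qed
qed

end

context kp begin

lemma cont_Kuv: assumes u: "continuous_on {0..1} u" and v: "continuous_on {0..1} v"
  shows "continuous_on ({0..1} \<times> {0..1}) (\<lambda>(x, t). K x t * u t * v x)"
proof -
  have "continuous_on ({0..1} \<times> {0..1}) (\<lambda>z. (\<lambda>(x, t). K x t) z * u (snd z) * v (fst z))"
    by (intro continuous_intros K_cont continuous_on_compose2[OF u] continuous_on_compose2[OF v]) auto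
  then show ?thesis by (simp add: case_prod_beta)
qed

lemma Ip_F_eq: "Ip (\<lambda>t. K x t * u t * v x) = v x * LK K p u x"
proof -
  have "Ip (\<lambda>t. K x t * u t * v x) = Ip (\<lambda>t. v x * (K x t * u t))" by (simp add: ac_simps)
  then show ?thesis by (simp add: Ip_cmul LK_Ip)
qed

lemma nonneg_eps: fixes a :: real assumes "\<And>e. e > 0 \<Longrightarrow> - e \<le> a" shows "0 \<le> a"
proof (rule ccontr)
  assume "\<not> 0 \<le> a" then have "- a / 2 > 0" by simp
  from assms[OF this] `\<not> 0 \<le> a` show False by simp
qed

lemma LK_psd: assumes u: "continuous_on {0..1} u" shows "0 \<le> Ip (\<lambda>x. LK K p u x * u x)"
proof (rule nonneg_eps)
  fix e :: real assume e: "e > 0"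
  define F where "F x t = K x t * u t * u x" for x t
  have cF: "continuous_on ({0..1} \<times> {0..1}) (\<lambda>(x, t). F x t)" unfolding F_def using cont_Kuv[OF u u] .
  obtain N where N: "N > 0" "\<bar>Ip (\<lambda>x. Ip (F x)) - DD N F\<bar> \<le> e"
    using discr2[OF cF e] by blast
  have "Ip (\<lambda>x. Ip (F x)) = Ip (\<lambda>x. LK K p u x * u x)"
    unfolding F_def Ip_F_eq by (simp add: mult.commute)
  moreover have "0 \<le> DD N F"
  proof -
    define c where "c i = ww N i * u (zz N i)" for i
    have "DD N F = (\<Sum>j<N. \<Sum>k<N. c j * c k * K (zz N j) (zz N k))"
      unfolding DD_def F_def c_def by (subst sum.swap) (simp add: ac_simps)
    also have "\<dots> \<ge> 0" using K_pd[of N "zz N" c] zz_in by auto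
    finally show ?thesis .
  qed
  ultimately show "- e \<le> Ip (\<lambda>x. LK K p u x * u x)" using N(2) by linarith
qed

lemma eq_eps: fixes a b :: real assumes "\<And>e. e > 0 \<Longrightarrow> \<bar>a - b\<bar> \<le> e" shows "a = b"
proof (rule ccontr)
  assume "a \<noteq> b" then have "\<bar>a - b\<bar> / 2 > 0" by simp
  from assms[OF this] `a \<noteq> b` show False by simp
qed

lemma LK_sym: assumes u: "continuous_on {0..1} u" and v: "continuous_on {0..1} v"
  shows "Ip (\<lambda>x. LK K p u x * v x) = Ip (\<lambda>x. u x * LK K p v x)"
proof (rule eq_eps)
  fix e :: real assume e: "e > 0"
  define F1 where "F1 x t = K x t * u t * v x" for x t
  define F2 where "F2 x t = K x t * v t * u x" for x t
  have c1: "continuous_on ({0..1} \<times> {0..1}) (\<lambda>(x, t). F1 x t)" unfolding F1_def using cont_Kuv[OF u v] .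
  have c2: "continuous_on ({0..1} \<times> {0..1}) (\<lambda>(x, t). F2 x t)" unfolding F2_def using cont_Kuv[OF v u] .
  obtain N1 where N1: "N1 > 0" "\<forall>N\<ge>N1. \<bar>Ip (\<lambda>x. Ip (F1 x)) - DD N F1\<bar> \<le> e/2"
    using discr2[OF c1, of "e/2"] e by auto
  obtain N2 where N2: "N2 > 0" "\<forall>N\<ge>N2. \<bar>Ip (\<lambda>x. Ip (F2 x)) - DD N F2\<bar> \<le> e/2"
    using discr2[OF c2, of "e/2"] e by auto
  define N where "N = max N1 N2"
  have a1: "\<bar>Ip (\<lambda>x. Ip (F1 x)) - DD N F1\<bar> \<le> e/2" using N1 N_def by auto
  have a2: "\<bar>Ip (\<lambda>x. Ip (F2 x)) - DD N F2\<bar> \<le> e/2" using N2 N_def by auto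
  have e1: "Ip (\<lambda>x. Ip (F1 x)) = Ip (\<lambda>x. LK K p u x * v x)"
    unfolding F1_def Ip_F_eq by (simp add: mult.commute)
  have e2: "Ip (\<lambda>x. Ip (F2 x)) = Ip (\<lambda>x. u x * LK K p v x)"
    unfolding F2_def Ip_F_eq by (simp add: mult.commute)
  have "DD N F2 = (\<Sum>j<N. \<Sum>k<N. ww N j * ww N k * F2 (zz N j) (zz N k))"
    unfolding DD_def by (rule sum.swap)
  also have "\<dots> = DD N F1"
    unfolding DD_def F1_def F2_def
  proof (intro sum.cong refl)
    fix j k assume j: "j \<in> {..<N}" and k: "k \<in> {..<N}"
    have "K (zz N j) (zz N k) = K (zz N k) (zz N j)" using j k zz_in by (intro K_sym) auto
    then show "ww N j * ww N k * (K (zz N j) (zz N k) * v (zz N k) * u (zz N j)) =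
               ww N k * ww N j * (K (zz N k) (zz N j) * u (zz N j) * v (zz N k))"
      by (simp add: ac_simps)
  qed
  finally show "\<bar>Ip (\<lambda>x. LK K p u x * v x) - Ip (\<lambda>x. u x * LK K p v x)\<bar> \<le> e"
    using a1 a2 e1 e2 by linarith
qed

end

lemma quad_disc: fixes A B C :: real
  assumes H: "\<And>s. 0 \<le> A + 2 * B * s + C * s\<^sup>2" and C: "0 \<le> C"
  shows "B\<^sup>2 \<le> A * C"
proof (cases "C = 0")
  case True
  have "B = 0"
  proof (rule ccontr)
    assume B: "B \<noteq> 0"
    have "0 \<le> A + 2 * B * (- (A + 1) / (2 * B))" using H[of "- (A + 1) / (2 * B)"] True by simp
    also have "\<dots> = -1" using B by (simp add: field_simps)
    finally show False by simp
  qed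
  then show ?thesis using True by simp
next
  case False
  then have Cp: "C > 0" using C by simp
  have "0 \<le> A + 2 * B * (- B / C) + C * (- B / C)\<^sup>2" using H by blast
  also have "\<dots> = A - B\<^sup>2 / C" using Cp by (simp add: field_simps power2_eq_square)
  finally have "B\<^sup>2 / C \<le> A" by simp
  then show ?thesis using Cp by (simp add: field_simps mult.commute)
qed

context kp begin

lemma Ip_cong: "(\<And>x. x \<in> {0..1} \<Longrightarrow> f x = g x) \<Longrightarrow> Ip f = Ip g"
  unfolding Ip_def by (intro integral_cong) simp

lemma CS_psd: assumes u: "continuous_on {0..1} u" and v: "continuous_on {0..1} v"
  shows "(Ip (\<lambda>x. LK K p u x * v x))\<^sup>2 \<le> Ip (\<lambda>x. LK K p u x * u x) * Ip (\<lambda>x. LK K p v x * v x)"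
proof (rule quad_disc)
  define A where "A = Ip (\<lambda>x. LK K p u x * u x)"
  define B where "B = Ip (\<lambda>x. LK K p u x * v x)"
  define C where "C = Ip (\<lambda>x. LK K p v x * v x)"
  show "0 \<le> C" unfolding C_def using LK_psd[OF v] .
  fix s :: real
  have cw: "continuous_on {0..1} (\<lambda>t. u t + s * v t)" using u v by (intro continuous_intros)
  have Tu: "continuous_on {0..1} (LK K p u)" using LK_cont[OF u] .
  have Tv: "continuous_on {0..1} (LK K p v)" using LK_cont[OF v] .
  have B': "Ip (\<lambda>x. LK K p v x * u x) = B"
    unfolding B_def using LK_sym[OF v u] by (simp add: mult.commute)
  have "0 \<le> Ip (\<lambda>x. LK K p (\<lambda>t. u t + s * v t) x * (u x + s * v x))" using LK_psd[OF cw] .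
  also have "\<dots> = Ip (\<lambda>x. (LK K p u x * u x + s * (LK K p u x * v x)) + (s * (LK K p v x * u x) + s\<^sup>2 * (LK K p v x * v x)))"
  proof (rule Ip_cong)
    fix x :: real assume x: "x \<in> {0..1}"
    have "LK K p (\<lambda>t. u t + s * v t) x = LK K p u x + s * LK K p v x"
      using LK_add[OF u _ x, of "\<lambda>t. s * v t"] v LK_cmul by (simp add: continuous_intros)
    then show "LK K p (\<lambda>t. u t + s * v t) x * (u x + s * v x) =
       (LK K p u x * u x + s * (LK K p u x * v x)) + (s * (LK K p v x * u x) + s\<^sup>2 * (LK K p v x * v x))"
      by (simp add: algebra_simps power2_eq_square)
  qed
  also have "\<dots> = (A + s * B) + (s * B + s\<^sup>2 * C)"
  proof -
    have c1: "continuous_on {0..1} (\<lambda>x. LK K p u x * u x)" using u Tu by (intro continuous_intros)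
    have c2: "continuous_on {0..1} (\<lambda>x. s * (LK K p u x * v x))" using v Tu by (intro continuous_intros)
    have c3: "continuous_on {0..1} (\<lambda>x. s * (LK K p v x * u x))" using u Tv by (intro continuous_intros)
    have c4: "continuous_on {0..1} (\<lambda>x. s\<^sup>2 * (LK K p v x * v x))" using v Tv by (intro continuous_intros)
    have c12: "continuous_on {0..1} (\<lambda>x. LK K p u x * u x + s * (LK K p u x * v x))" using c1 c2 by (rule continuous_on_add)
    have c34: "continuous_on {0..1} (\<lambda>x. s * (LK K p v x * u x) + s\<^sup>2 * (LK K p v x * v x))" using c3 c4 by (rule continuous_on_add)
    show ?thesis
      unfolding Ip_add[OF c12 c34] Ip_add[OF c1 c2] Ip_add[OF c3 c4] Ip_cmul B' A_def B_def C_def by simp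
  qed
  also have "\<dots> = A + 2 * B * s + C * s\<^sup>2" by (simp add: algebra_simps)
  finally show "0 \<le> A + 2 * B * s + C * s\<^sup>2" .
qed

abbreviation sq where "sq u \<equiv> Ip (\<lambda>x. u x * u x)"

lemma key_ineq: assumes u: "continuous_on {0..1} u"
  shows "sq (LK K p u) \<le> kap * Ip (\<lambda>x. LK K p u x * u x)"
proof -
  define w where "w = LK K p u"
  have cw: "continuous_on {0..1} w" unfolding w_def using LK_cont[OF u] .
  define A where "A = Ip (\<lambda>x. LK K p u x * u x)"
  define B where "B = sq w"
  have A0: "0 \<le> A" unfolding A_def using LK_psd[OF u] .
  have B0: "0 \<le> B" unfolding B_def using Ip_sq_nonneg[OF cw] .
  have "B\<^sup>2 \<le> A * Ip (\<lambda>x. LK K p w x * w x)"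
    using CS_psd[OF u cw] unfolding A_def B_def w_def .
  also have "Ip (\<lambda>x. LK K p w x * w x) \<le> kap * B"
  proof -
    have cTw: "continuous_on {0..1} (LK K p w)" using LK_cont[OF cw] .
    have "Ip (\<lambda>x. LK K p w x * w x) \<le> Ip (\<lambda>x. (kap * sqrt B) * \<bar>w x\<bar>)"
    proof (rule Ip_le)
      show "continuous_on {0..1} (\<lambda>x. LK K p w x * w x)" using cTw cw by (intro continuous_intros)
      show "continuous_on {0..1} (\<lambda>x. kap * sqrt B * \<bar>w x\<bar>)" using cw by (intro continuous_intros)
      fix x :: real assume x: "x \<in> {0..1}"
      have "LK K p w x * w x \<le> \<bar>LK K p w x\<bar> * \<bar>w x\<bar>" by (simp add: abs_mult[symmetric])
      also have "\<dots> \<le> kap * sqrt B * \<bar>w x\<bar>"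
        using LK_bound[OF cw x] unfolding B_def by (intro mult_right_mono) auto
      finally show "LK K p w x * w x \<le> kap * sqrt B * \<bar>w x\<bar>" .
    qed
    also have "\<dots> = kap * sqrt B * Ip (\<lambda>x. \<bar>w x\<bar>)" by (simp add: Ip_cmul)
    also have "\<dots> \<le> kap * sqrt B * sqrt B"
      using Ip_abs_sq[OF cw] kap(1) B0 unfolding B_def by (intro mult_left_mono) auto
    also have "\<dots> = kap * B" using B0 by simp
    finally show ?thesis .
  qed
  then have "A * Ip (\<lambda>x. LK K p w x * w x) \<le> A * (kap * B)" using A0 by (intro mult_left_mono)
  finally have "B * B \<le> (kap * A) * B" by (simp add: power2_eq_square ac_simps)
  then have "B \<le> kap * A" using B0 A0 kap(1)
    by (metis mult_le_cancel_right not_le mult_nonneg_nonneg order_less_le_trans less_eq_real_def)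
  then show ?thesis unfolding A_def B_def w_def .
qed

lemma contraction: assumes r: "continuous_on {0..1} r"
  shows "sq (\<lambda>x. kap * r x - LK K p r x) \<le> kap\<^sup>2 * sq r"
proof -
  have Tr: "continuous_on {0..1} (LK K p r)" using LK_cont[OF r] .
  have "sq (\<lambda>x. kap * r x - LK K p r x) = Ip (\<lambda>x. kap\<^sup>2 * (r x * r x) - 2 * kap * (LK K p r x * r x) + LK K p r x * LK K p r x)"
    by (rule Ip_cong) (simp add: algebra_simps power2_eq_square)
  also have "\<dots> = kap\<^sup>2 * sq r - 2 * kap * Ip (\<lambda>x. LK K p r x * r x) + sq (LK K p r)"
    using r Tr by (simp add: Ip_add Ip_diff Ip_cmul continuous_intros)
  also have "\<dots> \<le> kap\<^sup>2 * sq r"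
  proof -
    have "0 \<le> kap * Ip (\<lambda>x. LK K p r x * r x)" using LK_psd[OF r] kap(1) by simp
    then show ?thesis using key_ineq[OF r] by linarith
  qed
  finally show ?thesis .
qed

end

context kp begin

definition solves where
  "solves lam h g \<longleftrightarrow> continuous_on {0..1} g \<and> (\<forall>x. x \<notin> {0..1} \<longrightarrow> g x = 0) \<and>
       (\<forall>x\<in>{0..1}. LK K p g x + lam * g x = h x)"

lemma tel_aux: fixes c kap lam L r :: real
  shows "c = kap + lam \<Longrightarrow> c \<noteq> 0 \<Longrightarrow> L/c + lam*(r/c) = r - (kap*r - L)/c"
proof -
  assume a: "c = kap + lam" "c \<noteq> 0"
  have "r - (kap*r - L)/c = (c * r - (kap*r - L))/c" using a(2) by (simp add: field_simps)
  also have "\<dots> = (L + lam * r)/c" using a(1) by (simp add: algebra_simps)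
  finally show ?thesis by (simp add: add_divide_distrib)
qed

lemma unique_sol: assumes lam: "lam > 0" and g1: "solves lam h g1" and g2: "solves lam h g2"
  shows "g1 = g2"
proof -
  define d where "d x = g1 x - g2 x" for x
  have c1: "continuous_on {0..1} g1" and c2: "continuous_on {0..1} g2" using g1 g2 unfolding solves_def by auto
  have cd: "continuous_on {0..1} d" unfolding d_def using c1 c2 by (intro continuous_intros)
  have Td: "LK K p d x = - lam * d x" if x: "x \<in> {0..1}" for x
  proof -
    have e1: "LK K p g1 x + lam * g1 x = h x" using g1 x unfolding solves_def by auto
    have e2: "LK K p g2 x + lam * g2 x = h x" using g2 x unfolding solves_def by auto
    have "LK K p d x = LK K p g1 x - LK K p g2 x" unfolding d_def using LK_diff[OF c1 c2 x] .
    also have "\<dots> = (h x - lam * g1 x) - (h x - lam * g2 x)" using e1 e2 by linarith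
    also have "\<dots> = - lam * d x" unfolding d_def by (simp add: algebra_simps)
    finally show ?thesis .
  qed
  have "0 \<le> Ip (\<lambda>x. LK K p d x * d x)" using LK_psd[OF cd] .
  also have "\<dots> = Ip (\<lambda>x. - lam * (d x * d x))" by (rule Ip_cong) (simp add: Td)
  also have "\<dots> = - lam * sq d" by (rule Ip_cmul)
  finally have "sq d \<le> 0" using lam by (simp add: mult_le_0_iff)
  then have sq0: "sq d = 0" using Ip_sq_nonneg[OF cd] by linarith
  have "d x = 0" if x: "x \<in> {0..1}" for x
  proof -
    have "\<bar>LK K p d x\<bar> \<le> 0" using LK_bound[OF cd x] sq0 by simp
    then show ?thesis using Td[OF x] lam by simp
  qed
  then show ?thesis using g1 g2 unfolding solves_def d_def fun_eq_iff by (metis eq_iff_diff_eq_0)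
qed

lemma exists_sol: assumes lam: "lam > 0" and h: "continuous_on {0..1} h"
  shows "\<exists>g. solves lam h g"
proof -
  define c where "c = kap + lam"
  define q where "q = kap / c"
  have c0: "c > 0" unfolding c_def using kap(1) lam by simp
  have q0: "0 < q" and q1: "q < 1" unfolding q_def c_def using kap(1) lam by auto
  define r where "r = rec_nat h (\<lambda>n f x. (kap * f x - LK K p f x) / c)"
  have r0: "r 0 = h" unfolding r_def by simp
  have rS: "r (Suc n) = (\<lambda>x. (kap * r n x - LK K p (r n) x) / c)" for n unfolding r_def by simp
  have cr: "continuous_on {0..1} (r n)" for n
  proof (induction n)
    case 0 then show ?case using h r0 by simp
  next
    case (Suc n) then show ?case unfolding rS using c0 by (intro continuous_intros LK_cont) auto
  qed
  define H where "H = sqrt (sq h)"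
  have H0: "0 \<le> H" unfolding H_def using Ip_sq_nonneg[OF h] by simp
  have nr: "sqrt (sq (r n)) \<le> q ^ n * H" for n
  proof (induction n)
    case 0 then show ?case using r0 H_def by simp
  next
    case (Suc n)
    have "sq (r (Suc n)) = Ip (\<lambda>x. (1 / c\<^sup>2) * ((kap * r n x - LK K p (r n) x) * (kap * r n x - LK K p (r n) x)))"
      unfolding rS by (simp add: power2_eq_square)
    also have "\<dots> = (1 / c\<^sup>2) * sq (\<lambda>x. kap * r n x - LK K p (r n) x)" by (rule Ip_cmul)
    also have "\<dots> \<le> (1 / c\<^sup>2) * (kap\<^sup>2 * sq (r n))" using contraction[OF cr] by (intro mult_left_mono) auto
    also have "\<dots> = q\<^sup>2 * sq (r n)" unfolding q_def by (simp add: power_divide)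
    finally have "sqrt (sq (r (Suc n))) \<le> sqrt (q\<^sup>2 * sq (r n))" by simp
    also have "\<dots> = q * sqrt (sq (r n))" using q0 by (simp add: real_sqrt_mult)
    also have "\<dots> \<le> q * (q ^ n * H)" using Suc q0 by (intro mult_left_mono) auto
    finally show ?case by simp
  qed
  define a where "a k x = LK K p (r k) x / c" for k x
  define Mk where "Mk k = kap * H / c * q ^ k" for k
  have aM: "\<And>k x. x \<in> {0..1} \<Longrightarrow> norm (a k x) \<le> Mk k"
  proof -
    fix k x assume x: "(x::real) \<in> {0..1}"
    have "\<bar>LK K p (r k) x\<bar> \<le> kap * (q ^ k * H)"
      using LK_bound[OF cr x] nr[of k] kap(1) by (meson mult_left_mono less_imp_le order_trans)
    then show "norm (a k x) \<le> Mk k" unfolding a_def Mk_def using c0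
      by (simp add: divide_right_mono field_simps)
  qed
  have sM: "summable Mk" unfolding Mk_def using q0 q1 by (intro summable_mult summable_geometric) simp
  define w where "w x = suminf (\<lambda>k. a k x)" for x
  have ul: "uniform_limit {0..1} (\<lambda>n x. \<Sum>k<n. a k x) w sequentially"
    unfolding w_def using Weierstrass_m_test[where A="{0..1}" and f=a and M=Mk, OF aM sM] by simp
  have cw: "continuous_on {0..1} w"
    using c0 by (intro uniform_limit_theorem[OF _ ul]) (auto simp: a_def intro!: always_eventually continuous_intros LK_cont cr)
  define gN where "gN n x = (\<Sum>k<n. r k x / c)" for n x
  have cgN: "continuous_on {0..1} (gN n)" for n unfolding gN_def using c0 by (intro continuous_intros cr) auto
  have TgN: "LK K p (gN n) x = (\<Sum>k<n. a k x)" if x: "x \<in> {0..1}" for n x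
  proof -
    have "LK K p (gN n) x = (\<Sum>k<n. LK K p (\<lambda>t. r k t / c) x)"
      unfolding gN_def using c0 x by (intro LK_sum) (auto intro!: continuous_intros cr)
    also have "\<dots> = (\<Sum>k<n. a k x)"
    proof (intro sum.cong refl)
      fix k
      have "LK K p (\<lambda>t. r k t / c) x = LK K p (\<lambda>t. (1/c) * r k t) x" by simp
      also have "\<dots> = (1/c) * LK K p (r k) x" by (rule LK_cmul)
      finally show "LK K p (\<lambda>t. r k t / c) x = a k x" unfolding a_def by simp
    qed
    finally show ?thesis .
  qed
  have ident: "h x - (\<Sum>k<n. a k x) - lam * gN n x = r n x" if x: "x \<in> {0..1}" for n x
  proof -
    have "(\<Sum>k<n. a k x) + lam * gN n x = (\<Sum>k<n. r k x - r (Suc k) x)"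
      unfolding gN_def a_def sum_distrib_left sum.distrib[symmetric]
    proof (intro sum.cong refl)
      fix k
      show "LK K p (r k) x / c + lam * (r k x / c) = r k x - r (Suc k) x"
        unfolding rS using c0 c_def by (intro tel_aux) auto
    qed
    also have "\<dots> = r 0 x - r n x" by (rule sum_lessThan_telescope')
    finally show ?thesis using r0 by simp
  qed
  define g where "g x = (if x \<in> {0..1} then (h x - w x) / lam else 0)" for x
  have cg: "continuous_on {0..1} g"
  proof (rule continuous_on_eq[of "{0..1}" "\<lambda>x. (h x - w x) / lam" g])
    show "continuous_on {0..1} (\<lambda>x. (h x - w x) / lam)" using h cw lam by (intro continuous_intros) auto
  qed (simp add: g_def)
  have Tg: "LK K p g x = w x" if x: "x \<in> {0..1}" for x
  proof (rule eq_eps)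
    fix e :: real assume e: "e > 0"
    define D where "D = 1 + kap / lam"
    define e1 where "e1 = e / (2 * D)"
    have Dpos: "D > 0" unfolding D_def using kap(1) lam by (simp add: add_pos_pos)
    then have e1p: "e1 > 0" unfolding e1_def using e by (intro divide_pos_pos) auto
    obtain N1 where N1: "\<And>n y. n \<ge> N1 \<Longrightarrow> y \<in> {0..1} \<Longrightarrow> \<bar>(\<Sum>k<n. a k y) - w y\<bar> < e1"
      using uniform_limitD[OF ul e1p] unfolding eventually_sequentially dist_real_def by blast
    define G where "G = H + 1"
    have G0: "G > 0" unfolding G_def using H0 by simp
    define e2 where "e2 = e * lam / (2 * kap * G)"
    have e2p: "e2 > 0" unfolding e2_def using e kap(1) lam G0 by simp
    obtain N2 where N2: "q ^ N2 < e2" using real_arch_pow_inv[OF e2p q1] by blast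
    define n where "n = max N1 N2"
    have qn: "q ^ n \<le> q ^ N2" unfolding n_def using q0 q1 by (intro power_decreasing) auto
    have diff: "\<bar>g y - gN n y\<bar> \<le> (e1 + \<bar>r n y\<bar>) / lam" if y: "y \<in> {0..1}" for y
    proof -
      have "g y - gN n y = ((\<Sum>k<n. a k y) - w y + r n y) / lam"
        using ident[OF y, of n] y lam unfolding g_def by (simp add: field_simps)
      moreover have "\<bar>(\<Sum>k<n. a k y) - w y\<bar> < e1" using N1[OF _ y, of n] unfolding n_def by simp
      ultimately show ?thesis using lam by (simp add: divide_right_mono abs_triangle_ineq order_trans)
    qed
    have cdiff: "continuous_on {0..1} (\<lambda>y. g y - gN n y)" using cg cgN by (intro continuous_intros)
    have "\<bar>LK K p g x - LK K p (gN n) x\<bar> = \<bar>LK K p (\<lambda>y. g y - gN n y) x\<bar>"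
      using LK_diff[OF cg cgN x] by simp
    also have "\<dots> \<le> kap * Ip (\<lambda>y. \<bar>g y - gN n y\<bar>)" using LK_bound1[OF cdiff x] .
    also have "\<dots> \<le> kap * Ip (\<lambda>y. (e1 + \<bar>r n y\<bar>) / lam)"
      using diff kap(1) cdiff cr cg cgN lam by (intro mult_left_mono Ip_le continuous_intros) auto
    also have "\<dots> = kap * ((e1 + Ip (\<lambda>y. \<bar>r n y\<bar>)) / lam)"
    proof -
      have "Ip (\<lambda>y. (e1 + \<bar>r n y\<bar>) / lam) = Ip (\<lambda>y. (1/lam) * (e1 + \<bar>r n y\<bar>))" by simp
      also have "\<dots> = (1/lam) * Ip (\<lambda>y. e1 + \<bar>r n y\<bar>)" by (rule Ip_cmul)
      also have "Ip (\<lambda>y. e1 + \<bar>r n y\<bar>) = e1 + Ip (\<lambda>y. \<bar>r n y\<bar>)"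
        using Ip_add[of "\<lambda>y. e1" "\<lambda>y. \<bar>r n y\<bar>"] cr[of n] Ip_const by (simp add: continuous_intros)
      finally show ?thesis by simp
    qed
    also have "\<dots> \<le> kap * ((e1 + q ^ N2 * H) / lam)"
    proof -
      have "Ip (\<lambda>y. \<bar>r n y\<bar>) \<le> q ^ N2 * H"
        using Ip_abs_sq[OF cr] nr[of n] qn H0 by (meson mult_right_mono order_trans)
      then show ?thesis using kap(1) lam by (intro mult_left_mono divide_right_mono) auto
    qed
    also have "\<dots> \<le> kap * ((e1 + e2 * H) / lam)"
      using N2 H0 kap(1) lam by (intro mult_left_mono divide_right_mono add_left_mono mult_right_mono) auto
    finally have A1: "\<bar>LK K p g x - LK K p (gN n) x\<bar> \<le> kap * ((e1 + e2 * H) / lam)" .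
    have A2: "\<bar>LK K p (gN n) x - w x\<bar> < e1" using N1[OF _ x, of n] TgN[OF x] unfolding n_def by simp
    have A3: "e1 + kap * ((e1 + e2 * H) / lam) \<le> e"
    proof -
      have "e1 + kap * (e1 / lam) = e1 * D" unfolding D_def by (simp add: algebra_simps)
      also have "\<dots> = e / 2" unfolding e1_def using Dpos by simp
      finally have "e1 + kap * (e1 / lam) = e / 2" .
      moreover have "kap * (e2 * H / lam) \<le> e / 2"
      proof -
        have "kap * (e2 * H / lam) = e / 2 * (H / G)"
          unfolding e2_def using lam kap(1) G0 by (simp add: field_simps)
        also have "\<dots> \<le> e / 2 * 1" using e H0 G_def by (intro mult_left_mono) auto
        finally show ?thesis by simp
      qed
      moreover have "kap * ((e1 + e2 * H) / lam) = kap * (e1 / lam) + kap * (e2 * H / lam)"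
        by (simp add: add_divide_distrib distrib_left)
      ultimately show ?thesis by linarith
    qed
    show "\<bar>LK K p g x - w x\<bar> \<le> e" using A1 A2 A3 by linarith
  qed
  have "solves lam h g"
    unfolding solves_def
  proof (intro conjI cg allI impI ballI)
    fix x :: real assume x: "x \<notin> {0..1}" show "g x = 0" using x unfolding g_def by (simp only: if_False)
  next
    fix x :: real assume x: "x \<in> {0..1}"
    show "LK K p g x + lam * g x = h x" using Tg[OF x] x lam unfolding g_def by simp
  qed
  then show ?thesis by blast
qed

lemma resolvent_solves: assumes "lam > 0" "continuous_on {0..1} h"
  shows "solves lam h (resolvent K p lam h)"
proof -
  have ex1: "\<exists>!g. solves lam h g" using exists_sol[OF assms] unique_sol[OF assms(1)] by blast
  have "resolvent K p lam h = (THE g. solves lam h g)"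
    unfolding resolvent_def solves_def by simp
  then show ?thesis using theI'[OF ex1] by simp
qed

end

lemma mvt_gen: fixes f f' :: "real \<Rightarrow> real"
  assumes a: "a \<in> {0<..<1}" and b: "b \<in> {0<..<1}" and ab: "a \<noteq> b"
    and D: "\<And>s. s \<in> {0<..<1} \<Longrightarrow> DERIV f s :> f' s"
  shows "\<exists>\<xi>. \<xi> \<in> {0<..<1} \<and> \<bar>\<xi> - a\<bar> \<le> \<bar>b - a\<bar> \<and> f b - f a = (b - a) * f' \<xi>"
proof -
  have cont: "continuous_on {u..v} f" if "u \<in> {0<..<1}" "v \<in> {0<..<1}" for u v
    using that by (intro continuous_at_imp_continuous_on ballI DERIV_isCont[OF D]) auto
  have dif: "f differentiable (at s)" if "s \<in> {0<..<1}" for s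
    using D[OF that] real_differentiable_def by blast
  show ?thesis
  proof (cases "a < b")
    case True
    obtain l z where z: "a < z" "z < b" "DERIV f z :> l" "f b - f a = (b - a) * l"
      using MVT[OF True cont[OF a b]] dif a b by (metis greaterThanLessThan_iff order.strict_trans)
    have zi: "z \<in> {0<..<1}" using z a b by auto
    have "l = f' z" using DERIV_unique[OF z(3) D[OF zi]] .
    then show ?thesis using z zi by (intro exI[of _ z]) auto
  next
    case False
    then have ba: "b < a" using ab by simp
    obtain l z where z: "b < z" "z < a" "DERIV f z :> l" "f a - f b = (a - b) * l"
      using MVT[OF ba cont[OF b a]] dif a b by (metis greaterThanLessThan_iff order.strict_trans)
    have zi: "z \<in> {0<..<1}" using z a b by auto
    have "l = f' z" using DERIV_unique[OF z(3) D[OF zi]] .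
    then show ?thesis using z zi by (intro exI[of _ z]) (auto simp: algebra_simps)
  qed
qed

locale kpd = kp +
  fixes K1 :: "real \<Rightarrow> real \<Rightarrow> real"
  assumes K1_cont: "continuous_on ({0..1} \<times> {0..1}) (\<lambda>(x, t). K1 x t)"
    and K_deriv: "\<And>x t. x \<in> {0<..<1} \<Longrightarrow> t \<in> {0..1} \<Longrightarrow> DERIV (\<lambda>s. K s t) x :> K1 x t"
begin

lemma LK_deriv: assumes u: "continuous_on {0..1} u" and x: "x \<in> {0<..<1}"
  shows "DERIV (LK K p u) x :> Ip (\<lambda>t. K1 x t * u t)"
  unfolding DERIV_def LIM_eq
proof (intro allI impI)
  fix r :: real assume r: "r > 0"
  define B where "B = Ip (\<lambda>t. \<bar>u t\<bar>)"
  have B0: "0 \<le> B" unfolding B_def using u by (intro Ip_nonneg continuous_intros) auto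
  define Bp where "Bp = B + 1"
  have Bp: "Bp > 0" unfolding Bp_def using B0 by simp
  define e' where "e' = r / (2 * Bp)"
  have e': "e' > 0" unfolding e'_def using r Bp by simp
  obtain d where d: "d > 0" and H: "\<forall>x\<in>{0..1}. \<forall>y\<in>{0..1}. \<forall>t\<in>{0..1}. \<forall>s\<in>{0..1}.
            \<bar>y - x\<bar> < d \<longrightarrow> \<bar>s - t\<bar> < d \<longrightarrow> \<bar>K1 y s - K1 x t\<bar> < e'"
    using ucF[OF K1_cont e'] by auto
  define s where "s = min d (min x (1 - x))"
  have s: "s > 0" unfolding s_def using d x by auto
  show "\<exists>s>0. \<forall>h. h \<noteq> 0 \<and> norm (h - 0) < s \<longrightarrow>
      norm ((LK K p u (x + h) - LK K p u x) / h - Ip (\<lambda>t. K1 x t * u t)) < r"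
  proof (intro exI[of _ s] conjI allI impI s)
    fix h :: real assume h: "h \<noteq> 0 \<and> norm (h - 0) < s"
    define y where "y = x + h"
    have y: "y \<in> {0<..<1}" using h x unfolding y_def s_def by auto
    have yx: "y \<noteq> x" using h y_def by simp
    have xI: "x \<in> {0..1}" and yI: "y \<in> {0..1}" using x y by auto
    have pt: "\<bar>(K y t - K x t) / h - K1 x t\<bar> \<le> e'" if t: "t \<in> {0..1}" for t
    proof -
      obtain \<xi> where xi: "\<xi> \<in> {0<..<1}" "\<bar>\<xi> - x\<bar> \<le> \<bar>y - x\<bar>" "K y t - K x t = (y - x) * K1 \<xi> t"
        using mvt_gen[OF x y yx[symmetric], of "\<lambda>s. K s t" "\<lambda>s. K1 s t"] K_deriv t by blast
      have "(K y t - K x t) / h = K1 \<xi> t" using xi(3) h unfolding y_def by simp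
      moreover have "\<bar>\<xi> - x\<bar> < d" using xi(2) h unfolding y_def s_def by auto
      ultimately show ?thesis using H xI t xi(1) by fastforce
    qed
    have cK: "continuous_on {0..1} (\<lambda>t. (K y t - K x t) / h * u t)"
      using u yI xI by (intro continuous_intros K_cont_slice) (auto simp: h)
    have cK1: "continuous_on {0..1} (\<lambda>t. K1 x t * u t)"
      using u xI by (intro continuous_intros contF_slice[OF K1_cont])
    have "(LK K p u y - LK K p u x) / h = Ip (\<lambda>t. (K y t - K x t) / h * u t)"
    proof -
      have "LK K p u y - LK K p u x = Ip (\<lambda>t. K y t * u t - K x t * u t)"
        unfolding LK_Ip using u xI yI by (intro Ip_diff[symmetric] continuous_intros K_cont_slice)
      also have "\<dots> = Ip (\<lambda>t. h * ((K y t - K x t) / h * u t))"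
        using h by (intro Ip_cong) (simp add: field_simps)
      also have "\<dots> = h * Ip (\<lambda>t. (K y t - K x t) / h * u t)" by (rule Ip_cmul)
      finally show ?thesis using h by simp
    qed
    then have "(LK K p u y - LK K p u x) / h - Ip (\<lambda>t. K1 x t * u t) =
        Ip (\<lambda>t. ((K y t - K x t) / h - K1 x t) * u t)"
      using Ip_diff[OF cK cK1] by (simp add: left_diff_distrib)
    also have "\<bar>\<dots>\<bar> \<le> Ip (\<lambda>t. e' * \<bar>u t\<bar>)"
    proof -
      have c: "continuous_on {0..1} (\<lambda>t. ((K y t - K x t) / h - K1 x t) * u t)"
        using cK cK1 by (simp add: left_diff_distrib continuous_intros)
      have "\<bar>Ip (\<lambda>t. ((K y t - K x t) / h - K1 x t) * u t)\<bar> \<le> Ip (\<lambda>t. \<bar>((K y t - K x t) / h - K1 x t) * u t\<bar>)"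
        using Ip_abs[OF c] .
      also have "\<dots> \<le> Ip (\<lambda>t. e' * \<bar>u t\<bar>)"
      proof (rule Ip_le)
        show "continuous_on {0..1} (\<lambda>t. \<bar>((K y t - K x t) / h - K1 x t) * u t\<bar>)"
          using continuous_on_rabs[OF c] .
        show "continuous_on {0..1} (\<lambda>t. e' * \<bar>u t\<bar>)" using u by (intro continuous_intros)
        fix t :: real assume t: "t \<in> {0..1}"
        show "\<bar>((K y t - K x t) / h - K1 x t) * u t\<bar> \<le> e' * \<bar>u t\<bar>"
          unfolding abs_mult using pt[OF t] by (intro mult_right_mono) auto
      qed
      finally show ?thesis .
    qed
    also have "\<dots> = e' * B" unfolding B_def by (rule Ip_cmul)
    also have "\<dots> < r"
    proof -
      have "e' * B \<le> e' * Bp" using e' Bp_def by simp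
      also have "\<dots> = r / 2" unfolding e'_def using Bp by simp
      finally show ?thesis using r by simp
    qed
    finally show "norm ((LK K p u (x + h) - LK K p u x) / h - Ip (\<lambda>t. K1 x t * u t)) < r"
      unfolding y_def by simp
  qed
qed

end

lemma ln2_ge: "1/2 \<le> ln (2::real)"
proof -
  have "exp (1/2::real) * exp (1/2) = exp 1" by (simp add: exp_add[symmetric])
  also have "\<dots> < 2 * 2" using exp_le by simp
  finally have lt: "exp (1/2::real) * exp (1/2) < 2 * 2" .
  have "exp (1/2::real) < 2"
  proof (rule ccontr)
    assume "\<not> exp (1/2::real) < 2"
    then have "2 \<le> exp (1/2::real)" by simp
    then have "2 * 2 \<le> exp (1/2::real) * exp (1/2)" by (intro mult_mono) auto
    then show False using lt by simp
  qed
  then have "ln (exp (1/2::real)) < ln 2" by (intro ln_less_cancel_iff[THEN iffD2]) auto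
  then show ?thesis by simp
qed

lemma ext_lemma: fixes F F' :: "real \<Rightarrow> real"
  assumes D: "\<And>s. s \<in> {c - \<eta>..c + \<eta>} \<Longrightarrow> DERIV F s :> F' s"
    and d0: "0 \<le> \<delta>" and d1: "\<delta> < \<eta>"
    and L: "\<And>s. c - \<eta> \<le> s \<Longrightarrow> s \<le> c - \<delta> \<Longrightarrow> 0 \<le> F' s"
    and R: "\<And>s. c + \<delta> \<le> s \<Longrightarrow> s \<le> c + \<eta> \<Longrightarrow> F' s \<le> 0"
  shows "\<exists>\<tau>. \<bar>\<tau> - c\<bar> \<le> \<delta> \<and> (\<forall>s. \<bar>s - \<tau>\<bar> < \<eta> - \<delta> \<longrightarrow> F s \<le> F \<tau>)"
proof -
  have cont: "continuous_on {c - \<delta>..c + \<delta>} F"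
    using d1 by (intro continuous_at_imp_continuous_on ballI DERIV_isCont[OF D]) auto
  have ne: "{c - \<delta>..c + \<delta>} \<noteq> {}" using d0 by simp
  obtain \<tau> where tau: "\<tau> \<in> {c - \<delta>..c + \<delta>}" "\<And>s. s \<in> {c - \<delta>..c + \<delta>} \<Longrightarrow> F s \<le> F \<tau>"
    using continuous_attains_sup[OF compact_Icc ne cont] by blast
  show ?thesis
  proof (intro exI[of _ \<tau>] conjI allI impI)
    show "\<bar>\<tau> - c\<bar> \<le> \<delta>" using tau(1) by auto
    fix s assume s: "\<bar>s - \<tau>\<bar> < \<eta> - \<delta>"
    then have s1: "c - \<eta> < s" "s < c + \<eta>" using tau(1) by auto
    have "s < c - \<delta> \<or> (c - \<delta> \<le> s \<and> s \<le> c + \<delta>) \<or> c + \<delta> < s" by linarith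
    then consider "s < c - \<delta>" | "s \<in> {c - \<delta>..c + \<delta>}" | "c + \<delta> < s" by (simp only: atLeastAtMost_iff) blast
    then show "F s \<le> F \<tau>"
    proof cases
      case 1
      have "F s \<le> F (c - \<delta>)"
      proof (rule DERIV_nonneg_imp_nondecreasing[of s "c - \<delta>" F])
        fix x assume x: "s \<le> x" "x \<le> c - \<delta>"
        then show "\<exists>y. DERIV F x :> y \<and> 0 \<le> y" using D[of x] L[of x] s1 d0 d1 by auto
      qed (use 1 in auto)
      also have "\<dots> \<le> F \<tau>" using tau(2)[of "c - \<delta>"] d0 by auto
      finally show ?thesis .
    next
      case 2 then show ?thesis using tau(2) by auto
    next
      case 3
      have "- F (c + \<delta>) \<le> - F s"
      proof (rule DERIV_nonneg_imp_nondecreasing[of "c + \<delta>" s "\<lambda>x. - F x"])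
        fix x assume x: "c + \<delta> \<le> x" "x \<le> s"
        have "DERIV (\<lambda>x. - F x) x :> - F' x" using D[of x] x s1 d0 by (intro DERIV_minus) auto
        moreover have "0 \<le> - F' x" using R[of x] x s1 by auto
        ultimately show "\<exists>y. DERIV (\<lambda>x. - F x) x :> y \<and> 0 \<le> y" by blast
      qed (use 3 in auto)
      then have "F s \<le> F (c + \<delta>)" by simp
      also have "\<dots> \<le> F \<tau>" using tau(2)[of "c + \<delta>"] d0 by auto
      finally show ?thesis .
    qed
  qed
qed

lemma ext_sign: fixes F F' :: "real \<Rightarrow> real"
  assumes D: "\<And>s. s \<in> {c - \<eta>..c + \<eta>} \<Longrightarrow> DERIV F s :> F' s"
    and d0: "0 \<le> \<delta>" and d1: "\<delta> < \<eta>" and sub: "{c - \<eta>..c + \<eta>} \<subseteq> {0<..<1}"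
    and sg: "\<sigma> = 1 \<or> \<sigma> = (-1::real)"
    and L: "\<And>s. c - \<eta> \<le> s \<Longrightarrow> s \<le> c - \<delta> \<Longrightarrow> \<sigma> * F' s \<le> 0"
    and R: "\<And>s. c + \<delta> \<le> s \<Longrightarrow> s \<le> c + \<eta> \<Longrightarrow> 0 \<le> \<sigma> * F' s"
  shows "\<exists>\<tau>. \<bar>\<tau> - c\<bar> \<le> \<delta> \<and> is_local_extremum F \<tau> \<and> F' \<tau> = 0"
proof -
  have D': "DERIV (\<lambda>s. - \<sigma> * F s) s :> - \<sigma> * F' s" if "s \<in> {c - \<eta>..c + \<eta>}" for s
    using D[OF that] by (intro DERIV_cmult)
  obtain \<tau> where tau: "\<bar>\<tau> - c\<bar> \<le> \<delta>" "\<And>s. \<bar>s - \<tau>\<bar> < \<eta> - \<delta> \<Longrightarrow> - \<sigma> * F s \<le> - \<sigma> * F \<tau>"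
  proof -
    have L': "0 \<le> - \<sigma> * F' s" if "c - \<eta> \<le> s" "s \<le> c - \<delta>" for s using L[OF that] by simp
    have R': "- \<sigma> * F' s \<le> 0" if "c + \<delta> \<le> s" "s \<le> c + \<eta>" for s using R[OF that] by simp
    show ?thesis using ext_lemma[of c \<eta> "\<lambda>s. - \<sigma> * F s" "\<lambda>s. - \<sigma> * F' s" \<delta>, OF D' d0 d1 L' R'] that by blast
  qed
  have tin: "\<tau> \<in> {c - \<eta>..c + \<eta>}" using tau(1) d1 by auto
  have e: "\<eta> - \<delta> > 0" using d1 by simp
  have ti: "\<tau> \<in> {0<..<1}" using tin sub by auto
  show ?thesis
  proof (cases "\<sigma> = 1")
    case True
    then have mn: "\<forall>s. \<bar>s - \<tau>\<bar> < \<eta> - \<delta> \<longrightarrow> F \<tau> \<le> F s" using tau(2) by auto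
    have "F' \<tau> = 0"
      using DERIV_local_min[OF D[OF tin] e] mn by (simp add: abs_minus_commute)
    then show ?thesis using tau(1) ti mn e unfolding is_local_extremum_def by blast
  next
    case False
    then have "\<sigma> = -1" using sg by simp
    then have mx: "\<forall>s. \<bar>s - \<tau>\<bar> < \<eta> - \<delta> \<longrightarrow> F s \<le> F \<tau>" using tau(2) by auto
    have "F' \<tau> = 0"
      using DERIV_local_max[OF D[OF tin] e] mx by (simp add: abs_minus_commute)
    then show ?thesis using tau(1) ti mx e unfolding is_local_extremum_def by blast
  qed
qed

lemma slope_lemma: fixes G G' :: "real \<Rightarrow> real"
  assumes uv: "u \<le> v" and D: "\<And>s. u \<le> s \<Longrightarrow> s \<le> v \<Longrightarrow> DERIV G s :> G' s"
    and A: "\<And>s. u \<le> s \<Longrightarrow> s \<le> v \<Longrightarrow> A \<le> G' s"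
  shows "A * (v - u) \<le> G v - G u"
proof -
  have "G u - A * u \<le> G v - A * v"
  proof (rule DERIV_nonneg_imp_nondecreasing[of u v "\<lambda>s. G s - A * s", OF uv])
    fix x assume x: "u \<le> x" "x \<le> v"
    have "DERIV (\<lambda>s. G s - A * s) x :> G' x - A" using D[OF x] by (auto intro!: derivative_eq_intros)
    then show "\<exists>y. DERIV (\<lambda>s. G s - A * s) x :> y \<and> 0 \<le> y" using A[OF x] by auto
  qed
  then show ?thesis by (simp add: algebra_simps)
qed

lemma Kd_deriv: assumes B: "kernel_Ck 8 K Kd" and jl: "j + l < 8" and x: "x \<in> {0<..<1::real}" and t: "t \<in> {0..1}"
  shows "DERIV (\<lambda>s. Kd j l s t) x :> Kd (Suc j) l x t"
proof -
  have "((\<lambda>s. Kd j l s t) has_real_derivative Kd (Suc j) l x t) (at x within {0..1})"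
  proof -
    have "\<forall>j l. j + l < 8 \<longrightarrow> (\<forall>x\<in>{0..1}. \<forall>x'\<in>{0..1}.
        ((\<lambda>s. Kd j l s x') has_real_derivative Kd (Suc j) l x x') (at x within {0..1}) \<and>
        ((\<lambda>s. Kd j l x s) has_real_derivative Kd j (Suc l) x x') (at x' within {0..1}))"
      using B unfolding kernel_Ck_def by blast
    then show ?thesis using jl x t by simp
  qed
  moreover have "at x within {0..1} = at x" using x by (intro at_within_interior) simp
  ultimately show ?thesis by simp
qed

lemma K_deriv0: assumes B: "kernel_Ck 8 K Kd" and x: "x \<in> {0<..<1::real}" and t: "t \<in> {0..1}"
  shows "DERIV (\<lambda>s. K s t) x :> Kd 1 0 x t"
proof -
  have "DERIV (\<lambda>s. Kd 0 0 s t) x :> Kd 1 0 x t" using Kd_deriv[OF B _ x t, of 0 0] by simp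
  then show ?thesis
  proof (rule has_field_derivative_transform_within_open[of _ _ _ "{0<..<1}"])
    have "\<forall>x\<in>{0..1}. \<forall>x'\<in>{0..1}. Kd 0 0 x x' = K x x'" using B unfolding kernel_Ck_def by blast
    then show "\<And>s. s \<in> {0<..<1} \<Longrightarrow> Kd 0 0 s t = K s t" using t by auto
  qed (use x in auto)
qed

lemma mu_hat_D0: assumes B: "kernel_Ck 8 K Kd" and X: "\<forall>i<n. X i \<in> {0..1}" and x: "x \<in> {0<..<1::real}"
  shows "DERIV (mu_hat K n lam X y) x :> mu_hat_deriv K Kd n lam X y 0 x"
proof -
  have "DERIV (\<lambda>x. \<Sum>i<n. K x (X i) * krr_solve K n lam X y i) x :>
      (\<Sum>i<n. Kd 1 0 x (X i) * krr_solve K n lam X y i)"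
    using X by (intro DERIV_sum DERIV_cmult_right K_deriv0[OF B x]) auto
  then show ?thesis unfolding mu_hat_def[abs_def] mu_hat_deriv_def by simp
qed

lemma mu_hat_D1: assumes B: "kernel_Ck 8 K Kd" and X: "\<forall>i<n. X i \<in> {0..1}" and x: "x \<in> {0<..<1::real}"
  shows "DERIV (mu_hat_deriv K Kd n lam X y 0) x :> mu_hat_deriv K Kd n lam X y 1 x"
proof -
  have "DERIV (\<lambda>x. \<Sum>i<n. Kd 1 0 x (X i) * krr_solve K n lam X y i) x :>
      (\<Sum>i<n. Kd 2 0 x (X i) * krr_solve K n lam X y i)"
    using X Kd_deriv[OF B _ x, of 1 0] by (intro DERIV_sum DERIV_cmult_right) (auto simp: numeral_2_eq_2)
  then show ?thesis unfolding mu_hat_deriv_def[abs_def] by (simp add: numeral_2_eq_2)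
qed

context kpd begin

lemma flam_diff: assumes lam: "lam > 0" and f0: "continuous_on {0..1} f0" and x: "x \<in> {0<..<1}"
  shows "DERIV (f_lambda K p lam f0) x :> deriv (f_lambda K p lam f0) x"
proof -
  define g where "g = f_lambda K p lam f0"
  have h: "continuous_on {0..1} (LK K p f0)" using LK_cont[OF f0] .
  have sol: "solves lam (LK K p f0) g" unfolding g_def f_lambda_def using resolvent_solves[OF lam h] .
  then have cg: "continuous_on {0..1} g" unfolding solves_def by auto
  have eq: "g y = (LK K p f0 y - LK K p g y) / lam" if "y \<in> {0<..<1}" for y
    using sol that lam unfolding solves_def by (auto simp: field_simps)
  have "DERIV (\<lambda>y. (LK K p f0 y - LK K p g y) / lam) x :> (Ip (\<lambda>t. K1 x t * f0 t) - Ip (\<lambda>t. K1 x t * g t)) / lam"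
    by (intro DERIV_cdivide DERIV_diff LK_deriv f0 cg x)
  then have "DERIV g x :> (Ip (\<lambda>t. K1 x t * f0 t) - Ip (\<lambda>t. K1 x t * g t)) / lam"
    by (rule has_field_derivative_transform_within_open[of _ _ _ "{0<..<1}"]) (use x eq in auto)
  then show ?thesis unfolding g_def using DERIV_imp_deriv by metis
qed

end

lemma event_bound: fixes \<beta> \<gamma> lam c :: real and n :: nat
  assumes n: "2 \<le> n" and lam: "0 < lam" "lam < 1"
    and Lc: "sqrt (ln (real n)) / (sqrt (real n) * lam) \<le> c" and c1: "c \<le> 1"
  shows "\<bar>\<beta> * sqrt (10 * ln (real n) + 3) / (sqrt (real n) * lam) *
           (14 + 8 * \<gamma> * sqrt (10 * ln (real n) + 3) / (3 * sqrt (real n * lam)))\<bar>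
         \<le> \<bar>\<beta>\<bar> * 4 * (14 + 11 * \<bar>\<gamma>\<bar>) * (sqrt (ln (real n)) / (sqrt (real n) * lam))"
proof -
  define l where "l = ln (real n)"
  define s1 where "s1 = sqrt (10 * l + 3)"
  define sn where "sn = sqrt (real n)"
  define L where "L = sqrt l / (sn * lam)"
  have l2: "ln 2 \<le> l" unfolding l_def using n by (subst ln_le_cancel_iff) auto
  then have lh: "1/2 \<le> l" using ln2_ge by linarith
  have sn: "sn > 0" unfolding sn_def using n by simp
  have L0: "0 \<le> L" unfolding L_def using sn lam lh by simp
  have s1b: "s1 \<le> 4 * sqrt l"
  proof -
    have "s1 \<le> sqrt (16 * l)" unfolding s1_def using lh by (intro real_sqrt_le_mono) simp
    also have "\<dots> = 4 * sqrt l" by (simp add: real_sqrt_mult)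
    finally show ?thesis .
  qed
  have s10: "0 \<le> s1" unfolding s1_def using lh by simp
  have A: "s1 / (sn * lam) \<le> 4 * L"
    unfolding L_def using s1b sn lam by (simp add: divide_right_mono)
  have snl: "sqrt (real n * lam) = sn * sqrt lam" unfolding sn_def by (simp add: real_sqrt_mult)
  have sl: "0 < sqrt lam" "sqrt lam \<le> 1" using lam by auto
  have Lsl: "sqrt l / (sn * sqrt lam) = L * sqrt lam"
  proof -
    have "lam = sqrt lam * sqrt lam" using lam by simp
    then have "L * sqrt lam = sqrt l * sqrt lam / (sn * (sqrt lam * sqrt lam))" unfolding L_def by simp
    also have "\<dots> = sqrt l / (sn * sqrt lam)" using sl sn by (simp add: field_simps)
    finally show ?thesis by simp
  qed
  have Bq: "s1 / (3 * sqrt (real n * lam)) \<le> 4 / 3"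
  proof -
    have "s1 / (3 * sqrt (real n * lam)) \<le> 4 * sqrt l / (3 * (sn * sqrt lam))"
      unfolding snl using s1b sn sl by (intro divide_right_mono) auto
    also have "\<dots> = 4 / 3 * (sqrt l / (sn * sqrt lam))" by simp
    also have "\<dots> = 4 / 3 * (L * sqrt lam)" unfolding Lsl ..
    also have "\<dots> \<le> 4 / 3 * (L * 1)" using L0 sl by (intro mult_left_mono) auto
    also have "\<dots> \<le> 4 / 3"
    proof -
      have "L \<le> 1" using Lc c1 unfolding L_def l_def sn_def by linarith
      then show ?thesis by simp
    qed
    finally show ?thesis .
  qed
  have Bq0: "0 \<le> s1 / (3 * sqrt (real n * lam))" using s10 lam by simp
  have C: "\<bar>14 + 8 * \<gamma> * s1 / (3 * sqrt (real n * lam))\<bar> \<le> 14 + 11 * \<bar>\<gamma>\<bar>"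
  proof -
    have "\<bar>14 + 8 * \<gamma> * s1 / (3 * sqrt (real n * lam))\<bar> \<le> 14 + 8 * \<bar>\<gamma>\<bar> * (s1 / (3 * sqrt (real n * lam)))"
    proof -
      define Q where "Q = s1 / (3 * sqrt (real n * lam))"
      have Q0: "0 \<le> Q" unfolding Q_def using Bq0 .
      have e: "8 * \<gamma> * s1 / (3 * sqrt (real n * lam)) = 8 * \<gamma> * Q" unfolding Q_def by simp
      have "\<bar>14 + 8 * \<gamma> * Q\<bar> \<le> \<bar>14\<bar> + \<bar>8 * \<gamma> * Q\<bar>" by (rule abs_triangle_ineq)
      also have "\<dots> = 14 + 8 * \<bar>\<gamma>\<bar> * Q" using Q0 by (simp add: abs_mult)
      finally show ?thesis unfolding e Q_def .
    qed
    also have "\<dots> \<le> 14 + 8 * \<bar>\<gamma>\<bar> * (4/3)" using Bq by (intro add_left_mono mult_left_mono) auto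
    also have "\<dots> \<le> 14 + 11 * \<bar>\<gamma>\<bar>" by simp
    finally show ?thesis .
  qed
  have "\<bar>\<beta> * s1 / (sn * lam) * (14 + 8 * \<gamma> * s1 / (3 * sqrt (real n * lam)))\<bar>
      = \<bar>\<beta>\<bar> * (s1 / (sn * lam)) * \<bar>14 + 8 * \<gamma> * s1 / (3 * sqrt (real n * lam))\<bar>"
    using s10 sn lam by (simp add: abs_mult)
  also have "\<dots> \<le> \<bar>\<beta>\<bar> * (4 * L) * (14 + 11 * \<bar>\<gamma>\<bar>)"
    using A C s10 sn lam L0 by (intro mult_mono mult_left_mono) auto
  finally show ?thesis unfolding s1_def sn_def L_def l_def by (simp add: ac_simps)
qed

lemma sig_le: "\<sigma> = 1 \<or> \<sigma> = (-1::real) \<Longrightarrow> \<sigma> * x \<le> \<bar>x\<bar>" by auto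
lemma sig_ge: "\<sigma> = 1 \<or> \<sigma> = (-1::real) \<Longrightarrow> - \<bar>x\<bar> \<le> \<sigma> * x" by auto

lemma cancel_aux: fixes u a e :: real assumes "u > 0" "a > 0" shows "2 * u / a * (a * e / (8 * u)) = e / 4"
  using assms by (simp add: field_simps)

lemma cancel2: fixes u a :: real assumes "u > 0" shows "u * (a / (8 * u)) = a / 8"
  using assms by (simp add: field_simps)

lemma powr_small: fixes lam X r :: real
  assumes "0 < lam" "lam < X powr (1/r)" "0 < X" "0 < r"
  shows "lam powr r < X"
proof -
  have "lam powr r < (X powr (1/r)) powr r" using assms by (intro powr_less_mono2) auto
  also have "\<dots> = X" using assms by (simp add: powr_powr)
  finally show ?thesis .
qed

theorem lemma2:
  fixes f0 f0' f0'' :: "real \<Rightarrow> real" and t :: "nat \<Rightarrow> real" and M :: nat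
    and K :: "real \<Rightarrow> real \<Rightarrow> real" and Kd :: "nat \<Rightarrow> nat \<Rightarrow> real \<Rightarrow> real \<Rightarrow> real"
    and p :: "real \<Rightarrow> real" and sig r1 r2 :: real
  assumes dens: "\<forall>x\<in>{0..1}. 0 \<le> p x" "p integrable_on {0..1}" "integral {0..1} p = 1"
    and sig: "0 < sig"
    and A1: "\<forall>x\<in>{0..1}. (f0 has_real_derivative f0' x) (at x within {0..1})"
            "\<forall>x\<in>{0..1}. (f0' has_real_derivative f0'' x) (at x within {0..1})"
            "continuous_on {0..1} f0''"
    and A2: "1 \<le> M" "strict_mono_on {1..M} t" "\<forall>m\<in>{1..M}. 0 < t m \<and> t m < 1"
            "{s. is_local_extremum f0 s} = t ` {1..M}"
    and A3: "\<forall>m\<in>{1..M}. f0'' (t m) \<noteq> 0"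
    and Kpd: "pd_kernel K"
    and B1: "kernel_Ck 8 K Kd"
    and C: "0 < r1" "r1 \<le> 1" "0 < r2" "r2 \<le> 1"
      "\<exists>c0>0. \<exists>C. \<forall>lam. 0 < lam \<and> lam < c0 \<longrightarrow>
         (\<forall>x\<in>{0<..<1}. \<bar>deriv (f_lambda K p lam f0) x - f0' x\<bar> \<le> C * lam powr r1 \<and>
                        \<bar>(deriv ^^ 2) (f_lambda K p lam f0) x - f0'' x\<bar> \<le> C * lam powr r2)"
  shows "\<exists>lam0>0. \<exists>C1>0. \<exists>C2>0. \<exists>c>0. \<forall>lam. 0 < lam \<and> lam < lam0 \<longrightarrow>
     (\<exists>tl :: nat \<Rightarrow> real.
        (\<forall>m\<in>{1..M}. is_local_extremum (f_lambda K p lam f0) (tl m) \<and> \<bar>tl m - t m\<bar> \<le> C1 * lam powr r1) \<and>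
        (\<forall>(n::nat) (X::nat \<Rightarrow> real) (y::nat \<Rightarrow> real).
            2 \<le> n \<and> (\<forall>i<n. X i \<in> {0..1}) \<and> sqrt (ln (real n)) / (sqrt (real n) * lam) \<le> c \<and>
            event_An K Kd p f0 sig lam n X y \<longrightarrow>
            (\<exists>th :: nat \<Rightarrow> real. \<forall>m\<in>{1..M}. is_local_extremum (mu_hat K n lam X y) (th m) \<and>
               \<bar>th m - tl m\<bar> \<le> C2 * sqrt (ln (real n)) / (sqrt (real n) * lam))))"
proof -
  have Kdat: "\<forall>x\<in>{0..1}. \<forall>x'\<in>{0..1}. Kd 0 0 x x' = K x x'" using B1 unfolding kernel_Ck_def by blast
  have Kdc: "\<forall>j l. j + l \<le> 8 \<longrightarrow> continuous_on ({0..1} \<times> {0..1}) (\<lambda>(x, x'). Kd j l x x')"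
    using B1 unfolding kernel_Ck_def by blast
  have Kcont: "continuous_on ({0..1} \<times> {0..1}) (\<lambda>(x, t). K x t)"
    by (rule continuous_on_eq[OF Kdc[rule_format, of 0 0]]) (use Kdat in auto)
  have K1cont: "continuous_on ({0..1} \<times> {0..1}) (\<lambda>(x, t). Kd 1 0 x t)"
    using Kdc[rule_format, of 1 0] by simp
  interpret kpd K p "Kd 1 0"
  proof unfold_locales
    show "\<And>x. x \<in> {0..1} \<Longrightarrow> 0 \<le> p x" using dens(1) by auto
    show "p integrable_on {0..1}" by (rule dens(2))
    show "integral {0..1} p = 1" by (rule dens(3))
    show "continuous_on ({0..1} \<times> {0..1}) (\<lambda>(x, t). K x t)" by (rule Kcont)
    show "\<And>x t. x \<in> {0..1} \<Longrightarrow> t \<in> {0..1} \<Longrightarrow> K x t = K t x" using Kpd unfolding pd_kernel_def by blast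
    show "\<And>(n::nat) (z::nat \<Rightarrow> real) (c::nat \<Rightarrow> real). (\<forall>i<n. z i \<in> {0..1}) \<Longrightarrow> 0 \<le> (\<Sum>i<n. \<Sum>j<n. c i * c j * K (z i) (z j))"
      using Kpd unfolding pd_kernel_def by blast
    show "continuous_on ({0..1} \<times> {0..1}) (\<lambda>(x, t). Kd 1 0 x t)" by (rule K1cont)
    show "\<And>x t. x \<in> {0<..<1} \<Longrightarrow> t \<in> {0..1} \<Longrightarrow> DERIV (\<lambda>s. K s t) x :> Kd 1 0 x t"
      by (rule K_deriv0[OF B1])
  qed
  have int01: "interior {0..1::real} = {0<..<1}" by simp
  have f0D: "DERIV f0 s :> f0' s" if "s \<in> {0<..<1}" for s
  proof -
    have "(f0 has_real_derivative f0' s) (at s within {0..1})" using A1(1) that by auto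
    moreover have "at s within {0..1} = at s" using that by (intro at_within_interior) simp
    ultimately show ?thesis by simp
  qed
  have f1D: "DERIV f0' s :> f0'' s" if "s \<in> {0<..<1}" for s
  proof -
    have "(f0' has_real_derivative f0'' s) (at s within {0..1})" using A1(2) that by auto
    moreover have "at s within {0..1} = at s" using that by (intro at_within_interior) simp
    ultimately show ?thesis by simp
  qed
  have f0c: "continuous_on {0..1} f0"
    unfolding continuous_on_eq_continuous_within using A1(1) DERIV_continuous by blast
  have tI: "t m \<in> {0<..<1}" if "m \<in> {1..M}" for m using A2(3) that by auto
  have f0't: "f0' (t m) = 0" if m: "m \<in> {1..M}" for m
  proof -
    have "is_local_extremum f0 (t m)" using A2(4) m by blast
    then obtain e where e: "e > 0" and
      H: "(\<forall>s. \<bar>s - t m\<bar> < e \<longrightarrow> f0 s \<le> f0 (t m)) \<or> (\<forall>s. \<bar>s - t m\<bar> < e \<longrightarrow> f0 (t m) \<le> f0 s)"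
      unfolding is_local_extremum_def by blast
    from H show ?thesis
    proof
      assume "\<forall>s. \<bar>s - t m\<bar> < e \<longrightarrow> f0 s \<le> f0 (t m)"
      then show ?thesis using DERIV_local_max[OF f0D[OF tI[OF m]] e] by (simp add: abs_minus_commute)
    next
      assume "\<forall>s. \<bar>s - t m\<bar> < e \<longrightarrow> f0 (t m) \<le> f0 s"
      then show ?thesis using DERIV_local_min[OF f0D[OF tI[OF m]] e] by (simp add: abs_minus_commute)
    qed
  qed
  define a where "a = Min ((\<lambda>m. \<bar>f0'' (t m)\<bar>) ` {1..M})"
  have fin: "finite ((\<lambda>m. \<bar>f0'' (t m)\<bar>) ` {1..M})" and ne: "(\<lambda>m. \<bar>f0'' (t m)\<bar>) ` {1..M} \<noteq> {}"
    using A2(1) by auto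
  have a0: "a > 0" unfolding a_def using A3 by (subst Min_gr_iff[OF fin ne]) auto
  have ale: "a \<le> \<bar>f0'' (t m)\<bar>" if "m \<in> {1..M}" for m unfolding a_def using fin that by (intro Min_le) auto
  have eta_ex: "\<exists>e>0. {t m - e..t m + e} \<subseteq> {0<..<1} \<and>
       (\<forall>s. \<bar>s - t m\<bar> \<le> e \<longrightarrow> \<bar>f0'' s - f0'' (t m)\<bar> \<le> \<bar>f0'' (t m)\<bar> / 2)" if m: "m \<in> {1..M}" for m
  proof -
    have pos: "\<bar>f0'' (t m)\<bar> / 2 > 0" using A3 m by auto
    have tI': "t m \<in> {0..1}" using tI[OF m] by auto
    have "\<forall>\<epsilon>>0. \<exists>\<delta>>0. \<forall>x'\<in>{0..1}. dist x' (t m) < \<delta> \<longrightarrow> dist (f0'' x') (f0'' (t m)) < \<epsilon>"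
      using A1(3) tI' unfolding continuous_on_iff by blast
    then obtain d where d: "d > 0" and H: "\<forall>x'\<in>{0..1}. dist x' (t m) < d \<longrightarrow> dist (f0'' x') (f0'' (t m)) < \<bar>f0'' (t m)\<bar> / 2"
      using pos by blast
    define e where "e = min (d/2) (min (t m / 2) ((1 - t m) / 2))"
    have e0: "e > 0" unfolding e_def using d tI[OF m] by auto
    have e2: "e \<le> min (t m / 2) ((1 - t m) / 2)" unfolding e_def by (rule min.cobounded2)
    have e1: "e \<le> t m / 2" "e \<le> (1 - t m) / 2" "e \<le> d / 2"
      using e2 min.cobounded1[of "t m / 2" "(1 - t m) / 2"] min.cobounded2[of "t m / 2" "(1 - t m) / 2"]
        min.cobounded1[of "d/2" "min (t m / 2) ((1 - t m) / 2)"] unfolding e_def[symmetric] by linarith+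
    show ?thesis
    proof (intro exI[of _ e] conjI allI impI e0)
      show "{t m - e..t m + e} \<subseteq> {0<..<1}" using e1 e0 tI[OF m] by auto
      fix s assume s: "\<bar>s - t m\<bar> \<le> e"
      then have "s \<in> {0..1}" "dist s (t m) < d" using e1 e0 tI[OF m] d by (auto simp: dist_real_def)
      then show "\<bar>f0'' s - f0'' (t m)\<bar> \<le> \<bar>f0'' (t m)\<bar> / 2" using H by (auto simp: dist_real_def)
    qed
  qed
  have "\<forall>m\<in>{1..M}. \<exists>e>0. {t m - e..t m + e} \<subseteq> {0<..<1} \<and>
       (\<forall>s. \<bar>s - t m\<bar> \<le> e \<longrightarrow> \<bar>f0'' s - f0'' (t m)\<bar> \<le> \<bar>f0'' (t m)\<bar> / 2)"
    using eta_ex by blast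
  from bchoice[OF this] obtain E where E: "\<forall>m\<in>{1..M}. E m > 0 \<and> {t m - E m..t m + E m} \<subseteq> {0<..<1} \<and>
       (\<forall>s. \<bar>s - t m\<bar> \<le> E m \<longrightarrow> \<bar>f0'' s - f0'' (t m)\<bar> \<le> \<bar>f0'' (t m)\<bar> / 2)" ..
  have E0: "E m > 0" and Esub: "{t m - E m..t m + E m} \<subseteq> {0<..<1}"
    and Ecl: "\<And>s. \<bar>s - t m\<bar> \<le> E m \<Longrightarrow> \<bar>f0'' s - f0'' (t m)\<bar> \<le> \<bar>f0'' (t m)\<bar> / 2"
    if m: "m \<in> {1..M}" for m using E m by blast+
  define \<eta> where "\<eta> = Min (E ` {1..M})"
  have finE: "finite (E ` {1..M})" and neE: "E ` {1..M} \<noteq> {}" using A2(1) by auto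
  have eta0: "\<eta> > 0" unfolding \<eta>_def using E0 by (subst Min_gr_iff[OF finE neE]) blast
  have etale: "\<eta> \<le> E m" if "m \<in> {1..M}" for m unfolding \<eta>_def using finE that by (intro Min_le) auto
  have etasub: "{t m - \<eta>..t m + \<eta>} \<subseteq> {0<..<1}" if m: "m \<in> {1..M}" for m
  proof -
    have "{t m - \<eta>..t m + \<eta>} \<subseteq> {t m - E m..t m + E m}" using etale[OF m] by simp
    then show ?thesis using Esub[OF m] by (rule order_trans)
  qed
  define \<sigma> where "\<sigma> m = (if f0'' (t m) > 0 then 1 else (-1::real))" for m
  have sg: "\<sigma> m = 1 \<or> \<sigma> m = -1" for m unfolding \<sigma>_def by auto
  have sgf: "\<sigma> m * f0'' (t m) = \<bar>f0'' (t m)\<bar>" if "m \<in> {1..M}" for m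
    unfolding \<sigma>_def using A3 that by auto
  have sf2: "a / 2 \<le> \<sigma> m * f0'' s" if m: "m \<in> {1..M}" and s: "\<bar>s - t m\<bar> \<le> \<eta>" for m s
  proof -
    have "\<bar>f0'' s - f0'' (t m)\<bar> \<le> \<bar>f0'' (t m)\<bar> / 2" using Ecl[OF m] etale[OF m] s by simp
    moreover have "- \<bar>f0'' s - f0'' (t m)\<bar> \<le> \<sigma> m * (f0'' s - f0'' (t m))" using sig_ge[OF sg[of m]] .
    ultimately have "- (\<bar>f0'' (t m)\<bar> / 2) \<le> \<sigma> m * (f0'' s - f0'' (t m))" by linarith
    moreover have "\<sigma> m * f0'' s = \<sigma> m * f0'' (t m) + \<sigma> m * (f0'' s - f0'' (t m))" by (simp add: algebra_simps)
    ultimately show ?thesis using sgf[OF m] ale[OF m] by linarith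
  qed
  have grow_r: "a / 2 * (s - t m) \<le> \<sigma> m * f0' s" if m: "m \<in> {1..M}" and s: "t m \<le> s" "s \<le> t m + \<eta>" for m s
  proof -
    have "a / 2 * (s - t m) \<le> \<sigma> m * f0' s - \<sigma> m * f0' (t m)"
    proof (rule slope_lemma[of "t m" s "\<lambda>s. \<sigma> m * f0' s" "\<lambda>s. \<sigma> m * f0'' s"])
      fix x assume x: "t m \<le> x" "x \<le> s"
      then have "x \<in> {t m - \<eta>..t m + \<eta>}" using s eta0 by auto
      then have "x \<in> {0<..<1}" using etasub[OF m] by blast
      then show "DERIV (\<lambda>s. \<sigma> m * f0' s) x :> \<sigma> m * f0'' x" by (intro DERIV_cmult f1D)
      show "a / 2 \<le> \<sigma> m * f0'' x" using sf2[OF m] x s by auto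
    qed (use s in auto)
    then show ?thesis using f0't[OF m] by simp
  qed
  have grow_l: "\<sigma> m * f0' s \<le> - (a / 2 * (t m - s))" if m: "m \<in> {1..M}" and s: "t m - \<eta> \<le> s" "s \<le> t m" for m s
  proof -
    have "a / 2 * (t m - s) \<le> \<sigma> m * f0' (t m) - \<sigma> m * f0' s"
    proof (rule slope_lemma[of s "t m" "\<lambda>s. \<sigma> m * f0' s" "\<lambda>s. \<sigma> m * f0'' s"])
      fix x assume x: "s \<le> x" "x \<le> t m"
      then have "x \<in> {t m - \<eta>..t m + \<eta>}" using s eta0 by auto
      then have "x \<in> {0<..<1}" using etasub[OF m] by blast
      then show "DERIV (\<lambda>s. \<sigma> m * f0' s) x :> \<sigma> m * f0'' x" by (intro DERIV_cmult f1D)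
      show "a / 2 \<le> \<sigma> m * f0'' x" using sf2[OF m] x s by auto
    qed (use s in auto)
    then show ?thesis using f0't[OF m] by simp
  qed
  obtain c0 Cc where c0: "c0 > 0" and HC: "\<And>lam. 0 < lam \<and> lam < c0 \<Longrightarrow>
         (\<forall>x\<in>{0<..<1}. \<bar>deriv (f_lambda K p lam f0) x - f0' x\<bar> \<le> Cc * lam powr r1 \<and>
                        \<bar>(deriv ^^ 2) (f_lambda K p lam f0) x - f0'' x\<bar> \<le> Cc * lam powr r2)"
    using C(5) by blast
  define Ca where "Ca = \<bar>Cc\<bar>"
  have Ca0: "0 \<le> Ca" unfolding Ca_def by simp
  define \<kappa>0 where "\<kappa>0 = kappa_diag Kd 0"
  define R where "R = R_const f0 sig"
  define \<gamma> where "\<gamma> = sqrt \<kappa>0"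
  define \<beta>0 where "\<beta>0 = 2 * sqrt (\<kappa>0 * kappa_diag Kd (Suc 0)) * R"
  define \<beta>1 where "\<beta>1 = 2 * sqrt (\<kappa>0 * kappa_diag Kd (Suc 1)) * R"
  define CE where "CE = \<bar>\<beta>0\<bar> * 4 * (14 + 11 * \<bar>\<gamma>\<bar>) + \<bar>\<beta>1\<bar> * 4 * (14 + 11 * \<bar>\<gamma>\<bar>) + 1"
  have CEb0: "\<bar>\<beta>0\<bar> * 4 * (14 + 11 * \<bar>\<gamma>\<bar>) + 1 \<le> CE" unfolding CE_def by simp
  have CEb1: "\<bar>\<beta>1\<bar> * 4 * (14 + 11 * \<bar>\<gamma>\<bar>) + 1 \<le> CE" unfolding CE_def by simp
  have CE1: "1 \<le> CE" using CEb0 by (smt (verit) mult_nonneg_nonneg abs_ge_zero)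
  define c where "c = min 1 (min (a * \<eta> / (16 * CE)) (a / (8 * CE)))"
  have cpos: "c > 0" unfolding c_def using a0 eta0 CE1 by auto
  have c1: "c \<le> 1" and c\<eta>: "c \<le> a * \<eta> / (16 * CE)" and ca: "c \<le> a / (8 * CE)"
    unfolding c_def by (auto simp del: divide_const_simps)
  define C1 where "C1 = 2 * (Ca + 1) / a"
  define C2 where "C2 = 4 * CE / a"
  have C1p: "C1 > 0" unfolding C1_def using a0 Ca0 by simp
  have C2p: "C2 > 0" unfolding C2_def using a0 CE1 by simp
  define X1 where "X1 = a * \<eta> / (8 * (Ca + 1))"
  define X2 where "X2 = a / (8 * (Ca + 1))"
  have X1p: "X1 > 0" unfolding X1_def using a0 eta0 Ca0 by simp
  have X2p: "X2 > 0" unfolding X2_def using a0 Ca0 by simp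
  define lam0 where "lam0 = min c0 (min 1 (min (X1 powr (1/r1)) (X2 powr (1/r2))))"
  have lam0p: "lam0 > 0" unfolding lam0_def using c0 X1p X2p by simp
  have main: "\<forall>lam. 0 < lam \<and> lam < lam0 \<longrightarrow>
     (\<exists>tl :: nat \<Rightarrow> real.
        (\<forall>m\<in>{1..M}. is_local_extremum (f_lambda K p lam f0) (tl m) \<and> \<bar>tl m - t m\<bar> \<le> C1 * lam powr r1) \<and>
        (\<forall>(n::nat) (X::nat \<Rightarrow> real) (y::nat \<Rightarrow> real).
            2 \<le> n \<and> (\<forall>i<n. X i \<in> {0..1}) \<and> sqrt (ln (real n)) / (sqrt (real n) * lam) \<le> c \<and>
            event_An K Kd p f0 sig lam n X y \<longrightarrow>
            (\<exists>th :: nat \<Rightarrow> real. \<forall>m\<in>{1..M}. is_local_extremum (mu_hat K n lam X y) (th m) \<and>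
               \<bar>th m - tl m\<bar> \<le> C2 * sqrt (ln (real n)) / (sqrt (real n) * lam))))"
  proof (intro allI impI)
    fix lam :: real assume lam: "0 < lam \<and> lam < lam0"
    have lam_pos: "0 < lam" using lam by simp
    have lamc0: "lam < c0" and lam1: "lam < 1" using lam unfolding lam0_def by auto
    have p1: "lam powr r1 < X1"
      using lam X1p C(1) unfolding lam0_def by (intro powr_small) auto
    have p2: "lam powr r2 < X2"
      using lam X2p C(3) unfolding lam0_def by (intro powr_small) auto
    have pr1: "0 \<le> lam powr r1" and pr2: "0 \<le> lam powr r2" by auto
    define fl where "fl = f_lambda K p lam f0"
    have flD: "DERIV fl s :> deriv fl s" if "s \<in> {0<..<1}" for s
      unfolding fl_def using flam_diff[OF lam_pos f0c that] .
    have HCl1: "\<bar>deriv fl x - f0' x\<bar> \<le> Ca * lam powr r1" if x: "x \<in> {0<..<1}" for x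
    proof -
      have "\<bar>deriv fl x - f0' x\<bar> \<le> Cc * lam powr r1" using HC[of lam] lam_pos lamc0 x unfolding fl_def by blast
      also have "\<dots> \<le> Ca * lam powr r1" unfolding Ca_def using pr1 by (intro mult_right_mono) auto
      finally show ?thesis .
    qed
    have HCl2: "\<bar>(deriv ^^ 2) fl x - f0'' x\<bar> \<le> Ca * lam powr r2" if x: "x \<in> {0<..<1}" for x
    proof -
      have "\<bar>(deriv ^^ 2) fl x - f0'' x\<bar> \<le> Cc * lam powr r2" using HC[of lam] lam_pos lamc0 x unfolding fl_def by blast
      also have "\<dots> \<le> Ca * lam powr r2" unfolding Ca_def using pr2 by (intro mult_right_mono) auto
      finally show ?thesis .
    qed
    define \<delta> where "\<delta> = C1 * lam powr r1"
    have \<delta>0: "0 \<le> \<delta>" unfolding \<delta>_def using C1p pr1 by simp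
    have a\<delta>: "a / 2 * \<delta> = Ca * lam powr r1 + lam powr r1" unfolding \<delta>_def C1_def using a0 by (simp add: distrib_right)
    have \<delta>\<eta>: "\<delta> < \<eta> / 4"
    proof -
      have "\<delta> = 2 * (Ca + 1) / a * lam powr r1" unfolding \<delta>_def C1_def ..
      also have "\<dots> < 2 * (Ca + 1) / a * X1" using p1 a0 Ca0 by (intro mult_strict_left_mono) auto
      also have "\<dots> = \<eta> / 4" unfolding X1_def using a0 Ca0 by (intro cancel_aux) auto
      finally show ?thesis .
    qed
    have tl_ex: "\<forall>m\<in>{1..M}. \<exists>\<tau>. \<bar>\<tau> - t m\<bar> \<le> \<delta> \<and> is_local_extremum fl \<tau> \<and> deriv fl \<tau> = 0"
    proof
      fix m assume m: "m \<in> {1..M}"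
      show "\<exists>\<tau>. \<bar>\<tau> - t m\<bar> \<le> \<delta> \<and> is_local_extremum fl \<tau> \<and> deriv fl \<tau> = 0"
      proof (rule ext_sign[of "t m" \<eta> fl "deriv fl" \<delta> "\<sigma> m"])
        show "\<And>s. s \<in> {t m - \<eta>..t m + \<eta>} \<Longrightarrow> DERIV fl s :> deriv fl s" using etasub[OF m] flD by blast
        show "0 \<le> \<delta>" by (rule \<delta>0)
        show "\<delta> < \<eta>" using \<delta>\<eta> eta0 by simp
        show "{t m - \<eta>..t m + \<eta>} \<subseteq> {0<..<1}" by (rule etasub[OF m])
        show "\<sigma> m = 1 \<or> \<sigma> m = -1" by (rule sg)
      next
        fix s assume s: "t m - \<eta> \<le> s" "s \<le> t m - \<delta>"
        have "s \<in> {t m - \<eta>..t m + \<eta>}" using s \<delta>0 eta0 by auto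
        then have si: "s \<in> {0<..<1}" using etasub[OF m] by blast
        have g: "\<sigma> m * f0' s \<le> - (a / 2 * (t m - s))" using grow_l[OF m s(1)] s \<delta>0 by simp
        have "a / 2 * \<delta> \<le> a / 2 * (t m - s)" using s a0 by (intro mult_left_mono) auto
        moreover have "\<sigma> m * deriv fl s = \<sigma> m * f0' s + \<sigma> m * (deriv fl s - f0' s)" by (simp add: algebra_simps)
        moreover have "\<sigma> m * (deriv fl s - f0' s) \<le> \<bar>deriv fl s - f0' s\<bar>" by (rule sig_le[OF sg])
        ultimately show "\<sigma> m * deriv fl s \<le> 0" using g HCl1[OF si] a\<delta> pr1 by linarith
      next
        fix s assume s: "t m + \<delta> \<le> s" "s \<le> t m + \<eta>"
        have "s \<in> {t m - \<eta>..t m + \<eta>}" using s \<delta>0 eta0 by auto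
        then have si: "s \<in> {0<..<1}" using etasub[OF m] by blast
        have g: "a / 2 * (s - t m) \<le> \<sigma> m * f0' s" using grow_r[OF m _ s(2)] s \<delta>0 by simp
        have "a / 2 * \<delta> \<le> a / 2 * (s - t m)" using s a0 by (intro mult_left_mono) auto
        moreover have "\<sigma> m * deriv fl s = \<sigma> m * f0' s + \<sigma> m * (deriv fl s - f0' s)" by (simp add: algebra_simps)
        moreover have "- \<bar>deriv fl s - f0' s\<bar> \<le> \<sigma> m * (deriv fl s - f0' s)" by (rule sig_ge[OF sg])
        ultimately show "0 \<le> \<sigma> m * deriv fl s" using g HCl1[OF si] a\<delta> pr1 by linarith
      qed
    qed
    from bchoice[OF tl_ex] obtain tl where tl: "\<forall>m\<in>{1..M}. \<bar>tl m - t m\<bar> \<le> \<delta> \<and> is_local_extremum fl (tl m) \<and> deriv fl (tl m) = 0" ..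
    show "\<exists>tl :: nat \<Rightarrow> real.
        (\<forall>m\<in>{1..M}. is_local_extremum (f_lambda K p lam f0) (tl m) \<and> \<bar>tl m - t m\<bar> \<le> C1 * lam powr r1) \<and>
        (\<forall>(n::nat) (X::nat \<Rightarrow> real) (y::nat \<Rightarrow> real).
            2 \<le> n \<and> (\<forall>i<n. X i \<in> {0..1}) \<and> sqrt (ln (real n)) / (sqrt (real n) * lam) \<le> c \<and>
            event_An K Kd p f0 sig lam n X y \<longrightarrow>
            (\<exists>th :: nat \<Rightarrow> real. \<forall>m\<in>{1..M}. is_local_extremum (mu_hat K n lam X y) (th m) \<and>
               \<bar>th m - tl m\<bar> \<le> C2 * sqrt (ln (real n)) / (sqrt (real n) * lam)))"
    proof (rule exI[of _ tl], intro conjI allI impI ballI)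
      fix m assume m: "m \<in> {1..M}"
      show "is_local_extremum (f_lambda K p lam f0) (tl m)" using tl m unfolding fl_def by blast
      show "\<bar>tl m - t m\<bar> \<le> C1 * lam powr r1" using tl m unfolding \<delta>_def by blast
    next
      fix n :: nat and X y :: "nat \<Rightarrow> real"
      assume H: "2 \<le> n \<and> (\<forall>i<n. X i \<in> {0..1}) \<and> sqrt (ln (real n)) / (sqrt (real n) * lam) \<le> c \<and>
            event_An K Kd p f0 sig lam n X y"
      have n2: "2 \<le> n" and Xi: "\<forall>i<n. X i \<in> {0..1}" and ev: "event_An K Kd p f0 sig lam n X y" using H by auto
      define L where "L = sqrt (ln (real n)) / (sqrt (real n) * lam)"
      have Lc: "L \<le> c" unfolding L_def using H by simp
      have L0: "0 \<le> L" unfolding L_def using n2 lam_pos by simp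
      define mu0 where "mu0 = mu_hat_deriv K Kd n lam X y 0"
      define mu1 where "mu1 = mu_hat_deriv K Kd n lam X y 1"
      have evk: "\<forall>k\<le>3. \<forall>x\<in>{0<..<1}. \<bar>mu_hat_deriv K Kd n lam X y k x - (deriv ^^ Suc k) fl x\<bar>
          \<le> 2 * sqrt (\<kappa>0 * kappa_diag Kd (Suc k)) * R * sqrt (10 * ln (real n) + 3) / (sqrt (real n) * lam)
            * (14 + 8 * \<gamma> * sqrt (10 * ln (real n) + 3) / (3 * sqrt (real n * lam)))"
        using ev unfolding event_An_def Let_def \<kappa>0_def R_def \<gamma>_def fl_def by blast
      have bnd: "\<bar>\<beta> * sqrt (10 * ln (real n) + 3) / (sqrt (real n) * lam) *
           (14 + 8 * \<gamma> * sqrt (10 * ln (real n) + 3) / (3 * sqrt (real n * lam)))\<bar>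
         \<le> \<bar>\<beta>\<bar> * 4 * (14 + 11 * \<bar>\<gamma>\<bar>) * L" for \<beta>
        unfolding L_def by (rule event_bound[OF n2 lam_pos lam1 H[THEN conjunct2, THEN conjunct2, THEN conjunct1] c1])
      have Ev0: "\<bar>mu0 x - deriv fl x\<bar> \<le> CE * L" if x: "x \<in> {0<..<1}" for x
      proof -
        have "\<bar>mu0 x - deriv fl x\<bar> \<le> \<beta>0 * sqrt (10 * ln (real n) + 3) / (sqrt (real n) * lam)
            * (14 + 8 * \<gamma> * sqrt (10 * ln (real n) + 3) / (3 * sqrt (real n * lam)))"
          using evk[rule_format, of 0 x] x unfolding mu0_def \<beta>0_def by simp
        also have "\<dots> \<le> \<bar>\<beta>0\<bar> * 4 * (14 + 11 * \<bar>\<gamma>\<bar>) * L" using bnd[of \<beta>0] by linarith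
        also have "\<dots> \<le> CE * L" using CEb0 L0 by (intro mult_right_mono) auto
        finally show ?thesis .
      qed
      have Ev1: "\<bar>mu1 x - (deriv ^^ 2) fl x\<bar> \<le> CE * L" if x: "x \<in> {0<..<1}" for x
      proof -
        have "\<bar>mu1 x - (deriv ^^ 2) fl x\<bar> \<le> \<beta>1 * sqrt (10 * ln (real n) + 3) / (sqrt (real n) * lam)
            * (14 + 8 * \<gamma> * sqrt (10 * ln (real n) + 3) / (3 * sqrt (real n * lam)))"
          using evk[rule_format, of 1 x] x unfolding mu1_def \<beta>1_def by (simp add: numeral_2_eq_2)
        also have "\<dots> \<le> \<bar>\<beta>1\<bar> * 4 * (14 + 11 * \<bar>\<gamma>\<bar>) * L" using bnd[of \<beta>1] by linarith
        also have "\<dots> \<le> CE * L" using CEb1 L0 by (intro mult_right_mono) auto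
        finally show ?thesis .
      qed
      have CEL: "CE * L \<le> a / 8"
      proof -
        have "CE * L \<le> CE * c" using Lc CE1 by (intro mult_left_mono) auto
        also have "\<dots> \<le> CE * (a / (8 * CE))" using ca CE1 by (intro mult_left_mono) auto
        also have "\<dots> = a / 8" using CE1 by simp
        finally show ?thesis .
      qed
      have C2L: "C2 * L \<le> \<eta> / 4"
      proof -
        have "C2 * L \<le> C2 * c" using Lc C2p by (intro mult_left_mono) auto
        also have "\<dots> \<le> C2 * (a * \<eta> / (16 * CE))" using c\<eta> C2p by (intro mult_left_mono) auto
        also have "\<dots> = \<eta> / 4" unfolding C2_def using CE1 a0 by simp
        finally show ?thesis .
      qed
      have aC2: "a / 4 * (C2 * L) = CE * L" unfolding C2_def using a0 by simp
      have mu1s: "a / 4 \<le> \<sigma> m * mu1 s" if m: "m \<in> {1..M}" and s: "\<bar>s - t m\<bar> \<le> \<eta>" for m s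
      proof -
        have "s \<in> {t m - \<eta>..t m + \<eta>}" using s by auto
        then have si: "s \<in> {0<..<1}" using etasub[OF m] by blast
        have "Ca * lam powr r2 \<le> (Ca + 1) * lam powr r2" using pr2 by (simp add: distrib_right)
        also have "\<dots> \<le> (Ca + 1) * X2" using p2 Ca0 by (intro mult_left_mono) auto
        also have "\<dots> = a / 8" unfolding X2_def using Ca0 by (intro cancel2) auto
        finally have c2: "Ca * lam powr r2 \<le> a / 8" .
        have "\<sigma> m * mu1 s = \<sigma> m * f0'' s + \<sigma> m * ((deriv ^^ 2) fl s - f0'' s) + \<sigma> m * (mu1 s - (deriv ^^ 2) fl s)"
          by (simp add: algebra_simps)
        moreover have "- \<bar>(deriv ^^ 2) fl s - f0'' s\<bar> \<le> \<sigma> m * ((deriv ^^ 2) fl s - f0'' s)" by (rule sig_ge[OF sg])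
        moreover have "- \<bar>mu1 s - (deriv ^^ 2) fl s\<bar> \<le> \<sigma> m * (mu1 s - (deriv ^^ 2) fl s)" by (rule sig_ge[OF sg])
        ultimately show ?thesis using sf2[OF m s] HCl2[OF si] Ev1[OF si] c2 CEL by linarith
      qed
      have th_ex: "\<forall>m\<in>{1..M}. \<exists>\<theta>. \<bar>\<theta> - tl m\<bar> \<le> C2 * L \<and> is_local_extremum (mu_hat K n lam X y) \<theta> \<and> mu0 \<theta> = 0"
      proof
        fix m assume m: "m \<in> {1..M}"
        have tlm: "\<bar>tl m - t m\<bar> \<le> \<delta>" and tld: "deriv fl (tl m) = 0" using tl m by auto
        have sub1: "{tl m - \<eta> / 2..tl m + \<eta> / 2} \<subseteq> {t m - \<eta>..t m + \<eta>}" using tlm \<delta>\<eta> by auto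
        have sub: "{tl m - \<eta> / 2..tl m + \<eta> / 2} \<subseteq> {0<..<1}" using sub1 etasub[OF m] by blast
        have "tl m \<in> {tl m - \<eta> / 2..tl m + \<eta> / 2}" using eta0 by auto
        then have tli: "tl m \<in> {0<..<1}" using sub by blast
        have mutl: "\<bar>mu0 (tl m)\<bar> \<le> CE * L" using Ev0[OF tli] tld by simp
        have DD0: "DERIV (mu_hat K n lam X y) s :> mu0 s" if "s \<in> {0<..<1}" for s
          unfolding mu0_def using mu_hat_D0[OF B1 Xi that] .
        have DD1: "DERIV (\<lambda>s. \<sigma> m * mu0 s) s :> \<sigma> m * mu1 s" if "s \<in> {0<..<1}" for s
          unfolding mu0_def mu1_def using mu_hat_D1[OF B1 Xi that] by (intro DERIV_cmult)
        show "\<exists>\<theta>. \<bar>\<theta> - tl m\<bar> \<le> C2 * L \<and> is_local_extremum (mu_hat K n lam X y) \<theta> \<and> mu0 \<theta> = 0"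
        proof (rule ext_sign[of "tl m" "\<eta> / 2" "mu_hat K n lam X y" mu0 "C2 * L" "\<sigma> m"])
          show "\<And>s. s \<in> {tl m - \<eta> / 2..tl m + \<eta> / 2} \<Longrightarrow> DERIV (mu_hat K n lam X y) s :> mu0 s"
            using sub DD0 by blast
          show "0 \<le> C2 * L" using C2p L0 by simp
          show "C2 * L < \<eta> / 2" using C2L eta0 by simp
          show "{tl m - \<eta> / 2..tl m + \<eta> / 2} \<subseteq> {0<..<1}" by (rule sub)
          show "\<sigma> m = 1 \<or> \<sigma> m = -1" by (rule sg)
        next
          fix s assume s: "tl m - \<eta> / 2 \<le> s" "s \<le> tl m - C2 * L"
          have "a / 4 * (tl m - s) \<le> \<sigma> m * mu0 (tl m) - \<sigma> m * mu0 s"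
          proof (rule slope_lemma[of s "tl m" "\<lambda>s. \<sigma> m * mu0 s" "\<lambda>s. \<sigma> m * mu1 s"])
            show "s \<le> tl m" using s C2p L0 by (smt (verit) mult_nonneg_nonneg)
            fix x assume x: "s \<le> x" "x \<le> tl m"
            have xs: "x \<in> {tl m - \<eta> / 2..tl m + \<eta> / 2}" using x s eta0 by auto
            show "DERIV (\<lambda>s. \<sigma> m * mu0 s) x :> \<sigma> m * mu1 x" using DD1 sub xs by blast
            have "\<bar>x - t m\<bar> \<le> \<eta>" using xs sub1 by auto
            then show "a / 4 \<le> \<sigma> m * mu1 x" using mu1s[OF m] by blast
          qed
          moreover have "a / 4 * (C2 * L) \<le> a / 4 * (tl m - s)" using s a0 by (intro mult_left_mono) auto
          moreover have "\<sigma> m * mu0 (tl m) \<le> \<bar>mu0 (tl m)\<bar>" by (rule sig_le[OF sg])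
          ultimately show "\<sigma> m * mu0 s \<le> 0" using aC2 mutl by linarith
        next
          fix s assume s: "tl m + C2 * L \<le> s" "s \<le> tl m + \<eta> / 2"
          have "a / 4 * (s - tl m) \<le> \<sigma> m * mu0 s - \<sigma> m * mu0 (tl m)"
          proof (rule slope_lemma[of "tl m" s "\<lambda>s. \<sigma> m * mu0 s" "\<lambda>s. \<sigma> m * mu1 s"])
            show "tl m \<le> s" using s C2p L0 by (smt (verit) mult_nonneg_nonneg)
            fix x assume x: "tl m \<le> x" "x \<le> s"
            have xs: "x \<in> {tl m - \<eta> / 2..tl m + \<eta> / 2}" using x s eta0 by auto
            show "DERIV (\<lambda>s. \<sigma> m * mu0 s) x :> \<sigma> m * mu1 x" using DD1 sub xs by blast
            have "\<bar>x - t m\<bar> \<le> \<eta>" using xs sub1 by auto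
            then show "a / 4 \<le> \<sigma> m * mu1 x" using mu1s[OF m] by blast
          qed
          moreover have "a / 4 * (C2 * L) \<le> a / 4 * (s - tl m)" using s a0 by (intro mult_left_mono) auto
          moreover have "- \<bar>mu0 (tl m)\<bar> \<le> \<sigma> m * mu0 (tl m)" by (rule sig_ge[OF sg])
          ultimately show "0 \<le> \<sigma> m * mu0 s" using aC2 mutl by linarith
        qed
      qed
      from bchoice[OF th_ex] obtain th where th: "\<forall>m\<in>{1..M}. \<bar>th m - tl m\<bar> \<le> C2 * L \<and> is_local_extremum (mu_hat K n lam X y) (th m) \<and> mu0 (th m) = 0" ..
      have eqL: "C2 * L = C2 * sqrt (ln (real n)) / (sqrt (real n) * lam)" unfolding L_def by simp
      show "\<exists>th :: nat \<Rightarrow> real. \<forall>m\<in>{1..M}. is_local_extremum (mu_hat K n lam X y) (th m) \<and>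
               \<bar>th m - tl m\<bar> \<le> C2 * sqrt (ln (real n)) / (sqrt (real n) * lam)"
        using th unfolding eqL[symmetric] by blast
    qed
  qed
  show ?thesis
    apply (rule exI[of _ lam0], rule conjI[OF lam0p])
    apply (rule exI[of _ C1], rule conjI[OF C1p])
    apply (rule exI[of _ C2], rule conjI[OF C2p])
    apply (rule exI[of _ c], rule conjI[OF cpos])
    by (rule main)
qed

end
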